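(* Let $H(m)$ denote the Heisenberg Lie algebra of dimension $2m+1$. Then (i) $\mathcal{M}^{(2)}(H(1))\cong A(5)$; (ii) $\mathcal{M}^{(2)}(H(m))\cong A\!\left(\frac{8m^3-2m}{3}\right)$ for all $m\geq 2$.
   Context: All Lie algebras are over a fixed field. For a Lie algebra $L$ with free presentation $L\cong F/R$ ($F$ a free Lie algebra, $R$ an ideal of $F$), the $2$-nilpotent multiplier is $\mathcal{M}^{(2)}(L)=(R\cap F^{3})/[[R,F],F]$, where $F^3=[[F,F],F]$ is the third term of the lower central series; it is independent of the chosen presentation up to isomorphism. $A(k)$ denotes the abelian Lie algebra of dimension $k$. The Heisenberg Lie algebra $H(m)$ is the Lie algebra of dimension $2m+1$ with $H(m)^2=Z(H(m))$ and $\dim H(m)^2=1$. *)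

theory Defs
  imports Complex_Main "HOL-Library.Function_Algebras"
begin

definition lie_algebra ::
  "('k::field \<Rightarrow> 'l::ab_group_add \<Rightarrow> 'l) \<Rightarrow> ('l \<Rightarrow> 'l \<Rightarrow> 'l) \<Rightarrow> bool" where
  "lie_algebra scale br \<longleftrightarrow>
     vector_space scale \<and>
     (\<forall>x y z. br (x + y) z = br x z + br y z) \<and>
     (\<forall>x y z. br x (y + z) = br x y + br x z) \<and>
     (\<forall>a x y. br (scale a x) y = scale a (br x y)) \<and>
     (\<forall>a x y. br x (scale a y) = scale a (br x y)) \<and>
     (\<forall>x. br x x = 0) \<and>
     (\<forall>x y z. br x (br y z) + br y (br z x) + br z (br x y) = 0)"

definition lie_prod ::
  "('k::field \<Rightarrow> 'l::ab_group_add \<Rightarrow> 'l) \<Rightarrow> ('l \<Rightarrow> 'l \<Rightarrow> 'l) \<Rightarrow> 'l set \<Rightarrow> 'l set \<Rightarrow> 'l set" where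
  "lie_prod scale br A B = module.span scale {br a b | a b. a \<in> A \<and> b \<in> B}"

definition lie_center :: "('l::zero \<Rightarrow> 'l \<Rightarrow> 'l) \<Rightarrow> 'l set" where
  "lie_center br = {z. \<forall>x. br z x = 0}"

definition heisenberg ::
  "('k::field \<Rightarrow> 'l::ab_group_add \<Rightarrow> 'l) \<Rightarrow> ('l \<Rightarrow> 'l \<Rightarrow> 'l) \<Rightarrow> nat \<Rightarrow> bool" where
  "heisenberg scale br m \<longleftrightarrow>
     lie_algebra scale br \<and>
     vector_space.dim scale (UNIV :: 'l set) = 2 * m + 1 \<and>
     lie_prod scale br UNIV UNIV = lie_center br \<and>
     vector_space.dim scale (lie_prod scale br UNIV UNIV) = 1"

text \<open>Elements of the free associative algebra k<X> are functions from words to k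
  (the elements of the free Lie algebra below are automatically finitely supported).\<close>

definition fa_scale :: "'k::field \<Rightarrow> ('x list \<Rightarrow> 'k) \<Rightarrow> ('x list \<Rightarrow> 'k)" where
  "fa_scale c f = (\<lambda>w. c * f w)"

definition fa_mul :: "('x list \<Rightarrow> 'k::field) \<Rightarrow> ('x list \<Rightarrow> 'k) \<Rightarrow> ('x list \<Rightarrow> 'k)" where
  "fa_mul f g = (\<lambda>w. \<Sum>i\<le>length w. f (take i w) * g (drop i w))"

definition fa_comm :: "('x list \<Rightarrow> 'k::field) \<Rightarrow> ('x list \<Rightarrow> 'k) \<Rightarrow> ('x list \<Rightarrow> 'k)" where
  "fa_comm f g = fa_mul f g - fa_mul g f"

definition fa_gen :: "'x \<Rightarrow> ('x list \<Rightarrow> 'k::field)" where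
  "fa_gen x = (\<lambda>w. if w = [x] then 1 else 0)"

text \<open>The free Lie algebra on X: the Lie subalgebra of k<X> generated by X
  (Lie polynomials); by Witt's theorem this is free on X.\<close>
inductive_set free_lie :: "'x set \<Rightarrow> ('x list \<Rightarrow> 'k::field) set" for X where
  gen: "x \<in> X \<Longrightarrow> fa_gen x \<in> free_lie X"
| zero: "0 \<in> free_lie X"
| add: "f \<in> free_lie X \<Longrightarrow> g \<in> free_lie X \<Longrightarrow> f + g \<in> free_lie X"
| smult: "f \<in> free_lie X \<Longrightarrow> fa_scale c f \<in> free_lie X"
| bracket: "f \<in> free_lie X \<Longrightarrow> g \<in> free_lie X \<Longrightarrow> fa_comm f g \<in> free_lie X"

definition free_presentation ::
  "'x set \<Rightarrow> ('k::field \<Rightarrow> 'l::ab_group_add \<Rightarrow> 'l) \<Rightarrow> ('l \<Rightarrow> 'l \<Rightarrow> 'l)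
     \<Rightarrow> (('x list \<Rightarrow> 'k) \<Rightarrow> 'l) \<Rightarrow> bool" where
  "free_presentation X scale br \<phi> \<longleftrightarrow>
     (\<forall>f\<in>free_lie X. \<forall>g\<in>free_lie X. \<phi> (f + g) = \<phi> f + \<phi> g) \<and>
     (\<forall>c. \<forall>f\<in>free_lie X. \<phi> (fa_scale c f) = scale c (\<phi> f)) \<and>
     (\<forall>f\<in>free_lie X. \<forall>g\<in>free_lie X. \<phi> (fa_comm f g) = br (\<phi> f) (\<phi> g)) \<and>
     \<phi> ` free_lie X = UNIV"

definition pres_kernel :: "'x set \<Rightarrow> (('x list \<Rightarrow> 'k::field) \<Rightarrow> 'l::zero) \<Rightarrow> ('x list \<Rightarrow> 'k) set" where
  "pres_kernel X \<phi> = {f \<in> free_lie X. \<phi> f = 0}"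

section \<open>The 2-nilpotent multiplier (R \<inter> F^3) / [[R,F],F]\<close>

definition mult2_num :: "'x set \<Rightarrow> (('x list \<Rightarrow> 'k::field) \<Rightarrow> 'l::zero) \<Rightarrow> ('x list \<Rightarrow> 'k) set" where
  "mult2_num X \<phi> = pres_kernel X \<phi> \<inter>
     lie_prod fa_scale fa_comm (lie_prod fa_scale fa_comm (free_lie X) (free_lie X)) (free_lie X)"

definition mult2_den :: "'x set \<Rightarrow> (('x list \<Rightarrow> 'k::field) \<Rightarrow> 'l::zero) \<Rightarrow> ('x list \<Rightarrow> 'k) set" where
  "mult2_den X \<phi> =
     lie_prod fa_scale fa_comm (lie_prod fa_scale fa_comm (pres_kernel X \<phi>) (free_lie X)) (free_lie X)"

text \<open>quot_dim scale M N k: the quotient vector space M/N (N \<subseteq> M subspaces) has dimension k,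
  i.e. there are k elements of M whose classes form a basis of M/N.\<close>
definition quot_dim :: "('k::field \<Rightarrow> 'v::ab_group_add \<Rightarrow> 'v) \<Rightarrow> 'v set \<Rightarrow> 'v set \<Rightarrow> nat \<Rightarrow> bool" where
  "quot_dim scale M N k \<longleftrightarrow>
     (\<exists>B. finite B \<and> card B = k \<and> B \<subseteq> M \<and>
        M \<subseteq> module.span scale (B \<union> N) \<and>
        (\<forall>c. (\<Sum>b\<in>B. scale (c b) b) \<in> N \<longrightarrow> (\<forall>b\<in>B. c b = 0)))"

definition quot_iso_abelian ::
  "('k::field \<Rightarrow> 'v::ab_group_add \<Rightarrow> 'v) \<Rightarrow> ('v \<Rightarrow> 'v \<Rightarrow> 'v) \<Rightarrow> 'v set \<Rightarrow> 'v set \<Rightarrow> nat \<Rightarrow> bool" where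
  "quot_iso_abelian scale br M N k \<longleftrightarrow>
     (\<forall>a\<in>M. \<forall>b\<in>M. br a b \<in> N) \<and> quot_dim scale M N k"

abbreviation mult2_iso_abelian ::
  "'x set \<Rightarrow> (('x list \<Rightarrow> 'k::field) \<Rightarrow> 'l::zero) \<Rightarrow> nat \<Rightarrow> bool" where
  "mult2_iso_abelian X \<phi> k \<equiv>
     quot_iso_abelian fa_scale fa_comm (mult2_num X \<phi>) (mult2_den X \<phi>) k"

end

theory Submission
  imports Defs
begin


lemma sum_fun_apply: "(sum f A) x = sum (\<lambda>a. f a x) A"
  by (induction A rule: infinite_finite_induct) auto

lemma fa_scale_apply[simp]: "fa_scale c f w = c * f w" by (simp add: fa_scale_def)

lemma fa_vs: "vector_space (fa_scale :: 'k::field \<Rightarrow> ('x list \<Rightarrow> 'k) \<Rightarrow> _)"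
  by unfold_locales (auto simp: fun_eq_iff algebra_simps)

interpretation FA: vector_space "fa_scale :: 'k::field \<Rightarrow> ('x list \<Rightarrow> 'k) \<Rightarrow> _"
  by (rule fa_vs)

lemma fa_mul_add_left: "fa_mul (f + g) h = fa_mul f h + fa_mul g h"
  by (simp add: fa_mul_def fun_eq_iff algebra_simps sum.distrib)
lemma fa_mul_add_right: "fa_mul f (g + h) = fa_mul f g + fa_mul f h"
  by (simp add: fa_mul_def fun_eq_iff algebra_simps sum.distrib)
lemma fa_mul_scale_left: "fa_mul (fa_scale c f) h = fa_scale c (fa_mul f h)"
  by (simp add: fa_mul_def fun_eq_iff algebra_simps sum_distrib_left)
lemma fa_mul_scale_right: "fa_mul f (fa_scale c h) = fa_scale c (fa_mul f h)"
  by (simp add: fa_mul_def fun_eq_iff algebra_simps sum_distrib_left)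
lemma fa_mul_zero_left[simp]: "fa_mul 0 h = 0"
  by (simp add: fa_mul_def fun_eq_iff)
lemma fa_mul_zero_right[simp]: "fa_mul h 0 = 0"
  by (simp add: fa_mul_def fun_eq_iff)
lemma fa_mul_minus_left: "fa_mul (f - g) h = fa_mul f h - fa_mul g h"
  by (simp add: fa_mul_def fun_eq_iff algebra_simps sum_subtractf)
lemma fa_mul_minus_right: "fa_mul f (g - h) = fa_mul f g - fa_mul f h"
  by (simp add: fa_mul_def fun_eq_iff algebra_simps sum_subtractf)
lemma fa_mul_uminus_left: "fa_mul (- f) h = - fa_mul f h"
  by (simp add: fa_mul_def fun_eq_iff algebra_simps sum_negf)
lemma fa_mul_uminus_right: "fa_mul f (- h) = - fa_mul f h"
  by (simp add: fa_mul_def fun_eq_iff algebra_simps sum_negf)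

lemma fa_mul_assoc: "fa_mul (fa_mul f g) h = fa_mul f (fa_mul g h)"
proof (rule ext)
  fix w :: "'a list"
  define n where "n = length w"
  have "fa_mul (fa_mul f g) h w =
     (\<Sum>i\<le>n. \<Sum>j\<le>i. f (take j w) * g (take (i - j) (drop j w)) * h (drop i w))"
    unfolding fa_mul_def n_def
    by (auto simp: sum_distrib_right min_def take_drop intro!: sum.cong)
  also have "\<dots> = (\<Sum>(j,l)\<in>{(j,l). j + l \<le> n}. f (take j w) * g (take l (drop j w)) * h (drop (j+l) w))"
    by (subst sum.triangle_reindex_eq) (auto intro!: sum.cong)
  also have "\<dots> = (\<Sum>j\<le>n. \<Sum>l\<le>n - j. f (take j w) * g (take l (drop j w)) * h (drop (j+l) w))"
  proof -
    have "{(j,l). j + l \<le> n} = Sigma {..n} (\<lambda>j. {..n-j})" by auto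
    then show ?thesis by (simp add: sum.Sigma)
  qed
  also have "\<dots> = fa_mul f (fa_mul g h) w"
    unfolding fa_mul_def n_def
    by (auto simp: sum_distrib_left mult.assoc add.commute intro!: sum.cong)
  finally show "fa_mul (fa_mul f g) h w = fa_mul f (fa_mul g h) w" .
qed

lemma fa_comm_add_left: "fa_comm (f + g) h = fa_comm f h + fa_comm g h"
  by (simp add: fa_comm_def fa_mul_add_left fa_mul_add_right)
lemma fa_comm_add_right: "fa_comm f (g + h) = fa_comm f g + fa_comm f h"
  by (simp add: fa_comm_def fa_mul_add_left fa_mul_add_right)
lemma fa_comm_minus_left: "fa_comm (f - g) h = fa_comm f h - fa_comm g h"
  by (simp add: fa_comm_def fa_mul_minus_left fa_mul_minus_right)
lemma fa_comm_minus_right: "fa_comm f (g - h) = fa_comm f g - fa_comm f h"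
  by (simp add: fa_comm_def fa_mul_minus_left fa_mul_minus_right)
lemma fa_comm_uminus_left: "fa_comm (- f) h = - fa_comm f h"
  by (simp add: fa_comm_def fa_mul_uminus_left fa_mul_uminus_right)
lemma fa_comm_uminus_right: "fa_comm f (- h) = - fa_comm f h"
  by (simp add: fa_comm_def fa_mul_uminus_left fa_mul_uminus_right)
lemma fa_comm_scale_left: "fa_comm (fa_scale c f) h = fa_scale c (fa_comm f h)"
  by (simp add: fa_comm_def fa_mul_scale_left fa_mul_scale_right fun_eq_iff algebra_simps)
lemma fa_comm_scale_right: "fa_comm f (fa_scale c h) = fa_scale c (fa_comm f h)"
  by (simp add: fa_comm_def fa_mul_scale_left fa_mul_scale_right fun_eq_iff algebra_simps)
lemma fa_comm_zero[simp]: "fa_comm 0 h = 0" "fa_comm h 0 = 0"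
  by (simp_all add: fa_comm_def)
lemma fa_comm_antisym: "fa_comm g f = - fa_comm f g"
  by (simp add: fa_comm_def)
lemma fa_comm_self[simp]: "fa_comm f f = 0"
  by (simp add: fa_comm_def)
lemma fa_jacobi: "fa_comm (fa_comm a b) c = fa_comm (fa_comm a c) b + fa_comm a (fa_comm b c)"
  by (simp add: fa_comm_def fa_mul_minus_left fa_mul_minus_right fa_mul_assoc algebra_simps)

lemma fa_comm_sum_left: "fa_comm (\<Sum>i\<in>I. f i) h = (\<Sum>i\<in>I. fa_comm (f i) h)"
  proof (induction I rule: infinite_finite_induct)
  case (insert x F) then show ?case by (metis sum.insert fa_comm_add_left)
qed (metis sum.infinite sum.empty fa_comm_zero)+
lemma fa_comm_sum_right: "fa_comm h (\<Sum>i\<in>I. f i) = (\<Sum>i\<in>I. fa_comm h (f i))"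
  proof (induction I rule: infinite_finite_induct)
  case (insert x F) then show ?case by (metis sum.insert fa_comm_add_right)
qed (metis sum.infinite sum.empty fa_comm_zero)+
lemma fa_mul_sum_left: "fa_mul (\<Sum>i\<in>I. f i) h = (\<Sum>i\<in>I. fa_mul (f i) h)"
  proof (induction I rule: infinite_finite_induct)
  case (insert x F) then show ?case by (metis sum.insert fa_mul_add_left)
qed (metis sum.infinite sum.empty fa_mul_zero_left)+
lemma fa_mul_sum_right: "fa_mul h (\<Sum>i\<in>I. f i) = (\<Sum>i\<in>I. fa_mul h (f i))"
  proof (induction I rule: infinite_finite_induct)
  case (insert x F) then show ?case by (metis sum.insert fa_mul_add_right)
qed (metis sum.infinite sum.empty fa_mul_zero_right)+


definition fsupp :: "('x list \<Rightarrow> 'k::field) \<Rightarrow> bool" where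
  "fsupp f \<longleftrightarrow> finite {w. f w \<noteq> 0}"
definition low :: "nat \<Rightarrow> ('x list \<Rightarrow> 'k::field) \<Rightarrow> bool" where
  "low n f \<longleftrightarrow> (\<forall>w. length w < n \<longrightarrow> f w = 0)"

lemma fsupp_zero[simp]: "fsupp 0" by (simp add: fsupp_def)
lemma fsupp_add: "fsupp f \<Longrightarrow> fsupp g \<Longrightarrow> fsupp (f + g)"
  unfolding fsupp_def by (rule finite_subset[of _ "{w. f w \<noteq> 0} \<union> {w. g w \<noteq> 0}"]) auto
lemma fsupp_minus: "fsupp f \<Longrightarrow> fsupp g \<Longrightarrow> fsupp (f - g)"
  unfolding fsupp_def by (rule finite_subset[of _ "{w. f w \<noteq> 0} \<union> {w. g w \<noteq> 0}"]) auto
lemma fsupp_uminus: "fsupp f \<Longrightarrow> fsupp (- f)"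
  unfolding fsupp_def by simp
lemma fsupp_scale: "fsupp f \<Longrightarrow> fsupp (fa_scale c (f::'x list \<Rightarrow> 'k::field))"
  unfolding fsupp_def by (rule finite_subset[of _ "{w. f w \<noteq> 0}"]) auto
lemma fsupp_sum: "(\<And>i. i \<in> I \<Longrightarrow> fsupp (f i)) \<Longrightarrow> fsupp (\<Sum>i\<in>I. f i)"
  by (induction I rule: infinite_finite_induct) (auto intro: fsupp_add)
lemma fsupp_mul: "fsupp f \<Longrightarrow> fsupp g \<Longrightarrow> fsupp (fa_mul f (g::'x list \<Rightarrow> 'k::field))"
  unfolding fsupp_def
proof (rule finite_subset[of _ "(\<lambda>(u,v). u @ v) ` ({w. f w \<noteq> 0} \<times> {w. g w \<noteq> 0})"])
  show "{w. fa_mul f g w \<noteq> 0} \<subseteq> (\<lambda>(u,v). u @ v) ` ({w. f w \<noteq> 0} \<times> {w. g w \<noteq> 0})"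
  proof
    fix w assume "w \<in> {w. fa_mul f g w \<noteq> 0}"
    then obtain i where "f (take i w) * g (drop i w) \<noteq> 0"
      unfolding fa_mul_def by (auto elim: sum.not_neutral_contains_not_neutral)
    then show "w \<in> (\<lambda>(u,v). u @ v) ` ({w. f w \<noteq> 0} \<times> {w. g w \<noteq> 0})"
      by (auto intro!: image_eqI[of _ _ "(take i w, drop i w)"])
  qed
qed auto
lemma fsupp_comm: "fsupp f \<Longrightarrow> fsupp g \<Longrightarrow> fsupp (fa_comm f (g::'x list \<Rightarrow> 'k::field))"
  unfolding fa_comm_def by (intro fsupp_minus fsupp_mul)

lemma low_zero[simp]: "low n 0" by (simp add: low_def)
lemma low_add: "low n f \<Longrightarrow> low n g \<Longrightarrow> low n (f + g)" by (simp add: low_def)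
lemma low_minus: "low n f \<Longrightarrow> low n g \<Longrightarrow> low n (f - g)" by (simp add: low_def)
lemma low_uminus: "low n f \<Longrightarrow> low n (- f)" by (simp add: low_def)
lemma low_scale: "low n f \<Longrightarrow> low n (fa_scale c (f::'x list \<Rightarrow> 'k::field))" by (simp add: low_def)
lemma low_sum: "(\<And>i. i \<in> I \<Longrightarrow> low n (f i)) \<Longrightarrow> low n (\<Sum>i\<in>I. f i)"
  by (induction I rule: infinite_finite_induct) (auto intro: low_add)
lemma low_mono: "low n f \<Longrightarrow> k \<le> n \<Longrightarrow> low k f" by (simp add: low_def)
lemma low_mul: "low i f \<Longrightarrow> low j g \<Longrightarrow> low (i + j) (fa_mul f (g::'x list \<Rightarrow> 'k::field))"
  unfolding low_def fa_mul_def
proof (intro allI impI sum.neutral ballI)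
  fix w :: "'x list" and k
  assume f: "\<forall>w. length w < i \<longrightarrow> f w = 0" and g: "\<forall>w. length w < j \<longrightarrow> g w = 0"
    and w: "length w < i + j" and k: "k \<in> {..length w}"
  show "f (take k w) * g (drop k w) = 0"
  proof (cases "k < i")
    case True then show ?thesis using f k by auto
  next
    case False then have "length (drop k w) < j" using w k by auto
    then show ?thesis using g by auto
  qed
qed
lemma low_comm: "low i f \<Longrightarrow> low j g \<Longrightarrow> low (i + j) (fa_comm f (g::'x list \<Rightarrow> 'k::field))"
  unfolding fa_comm_def using low_mul[of i f j g] low_mul[of j g i f]
  by (intro low_minus) (auto simp: add.commute)

lemma fa_gen_fsupp: "fsupp (fa_gen x :: 'x list \<Rightarrow> 'k::field)"
  unfolding fsupp_def fa_gen_def by (rule finite_subset[of _ "{[x]}"]) auto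
lemma fa_gen_low: "low 1 (fa_gen x :: 'x list \<Rightarrow> 'k::field)"
  unfolding low_def fa_gen_def by auto

lemma free_lie_props: "f \<in> free_lie X \<Longrightarrow> fsupp f \<and> low 1 f"
proof (induction rule: free_lie.induct)
  case (gen x) then show ?case by (intro conjI fa_gen_fsupp fa_gen_low)
next
  case zero then show ?case by (simp only: fsupp_zero low_zero)
next
  case (add f g) then show ?case using fsupp_add low_add by blast
next
  case (smult f c) then show ?case using fsupp_scale low_scale by blast
next
  case (bracket f g)
  then have a: "fsupp (fa_comm f g)" by (intro fsupp_comm) auto
  have "low (1+1) (fa_comm f g)" using bracket by (intro low_comm) auto
  then have "low 1 (fa_comm f g)" by (rule low_mono) simp
  then show ?case using a by simp
qed

lemma free_lie_subspace: "FA.subspace (free_lie X)"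
  unfolding FA.subspace_def by (auto intro: free_lie.intros)
lemma free_lie_span: "FA.span (free_lie X) = free_lie X"
  by (rule FA.span_eq_iff[THEN iffD2, OF free_lie_subspace])
lemma free_lie_uminus: "f \<in> free_lie X \<Longrightarrow> - f \<in> free_lie X"
  using FA.subspace_neg[OF free_lie_subspace] by blast
lemma free_lie_diff: "f \<in> free_lie X \<Longrightarrow> g \<in> free_lie X \<Longrightarrow> f - g \<in> free_lie X"
  using FA.subspace_diff[OF free_lie_subspace] by blast
lemma free_lie_sum: "(\<And>i. i \<in> I \<Longrightarrow> f i \<in> free_lie X) \<Longrightarrow> (\<Sum>i\<in>I. f i) \<in> free_lie X"
  using FA.subspace_sum[OF free_lie_subspace] by blast

definition delta :: "'x list \<Rightarrow> 'x list \<Rightarrow> 'k::field" where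
  "delta u = (\<lambda>w. if w = u then 1 else 0)"

primrec wprod :: "('x \<Rightarrow> ('y list \<Rightarrow> 'k::field)) \<Rightarrow> 'x list \<Rightarrow> 'y list \<Rightarrow> 'k" where
  "wprod \<theta> [] = delta []"
| "wprod \<theta> (x # xs) = fa_mul (\<theta> x) (wprod \<theta> xs)"

definition subst :: "('x \<Rightarrow> ('y list \<Rightarrow> 'k::field)) \<Rightarrow> ('x list \<Rightarrow> 'k) \<Rightarrow> 'y list \<Rightarrow> 'k" where
  "subst \<theta> f = (\<Sum>w\<in>{w. f w \<noteq> 0}. fa_scale (f w) (wprod \<theta> w))"

lemma take_drop_eq:
  assumes "x \<le> length w" shows "(take x w = u \<and> drop x w = v) \<longleftrightarrow> (x = length u \<and> w = u @ v)"
proof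
  assume h: "take x w = u \<and> drop x w = v"
  have "length (take x w) = x" using assms by simp
  moreover have "w = take x w @ drop x w" by simp
  ultimately show "x = length u \<and> w = u @ v" using h by simp
next
  assume "x = length u \<and> w = u @ v" then show "take x w = u \<and> drop x w = v" by simp
qed

lemma delta_mul: "fa_mul (delta u) (delta v) = (delta (u @ v) :: 'x list \<Rightarrow> 'k::field)"
proof (rule ext)
  fix w :: "'x list"
  have "fa_mul (delta u) (delta v) w = (\<Sum>i\<le>length w. if i = length u \<and> w = u @ v then 1 else (0::'k))"
    unfolding fa_mul_def delta_def
  proof (intro sum.cong refl)
    fix i assume "i \<in> {..length w}"
    then have "i \<le> length w" by simp
    from take_drop_eq[OF this, of u v]
    show "(if take i w = u then 1 else 0) * (if drop i w = v then 1 else 0) =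
        (if i = length u \<and> w = u @ v then 1 else (0::'k))"
      by (auto split: if_splits)
  qed
  also have "\<dots> = delta (u @ v) w"
    by (auto simp: delta_def)
  finally show "fa_mul (delta u) (delta v) w = (delta (u @ v) w :: 'k)" .
qed

lemma delta_one_left: "fa_mul (delta []) f = f"
proof (rule ext)
  fix w
  have "fa_mul (delta []) f w = (\<Sum>i\<le>length w. if i = 0 then f w else 0)"
    unfolding fa_mul_def delta_def by (intro sum.cong refl) auto
  then show "fa_mul (delta []) f w = f w" by simp
qed
lemma delta_one_right: "fa_mul f (delta []) = f"
proof (rule ext)
  fix w
  have "fa_mul f (delta []) w = (\<Sum>i\<le>length w. if i = length w then f w else 0)"
    unfolding fa_mul_def delta_def by (intro sum.cong refl) auto
  then show "fa_mul f (delta []) w = f w" by simp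
qed

lemma wprod_append: "wprod \<theta> (u @ v) = fa_mul (wprod \<theta> u) (wprod \<theta> v)"
  by (induction u) (simp_all add: delta_one_left fa_mul_assoc)

lemma subst_eq: "finite S \<Longrightarrow> {w. f w \<noteq> 0} \<subseteq> S \<Longrightarrow>
   subst \<theta> f = (\<Sum>w\<in>S. fa_scale (f w) (wprod \<theta> w))"
  unfolding subst_def
  by (rule sum.mono_neutral_left) (auto simp: fun_eq_iff)

lemma fa_expand: "fsupp f \<Longrightarrow> f = (\<Sum>w\<in>{w. f w \<noteq> 0}. fa_scale (f w) (delta w))"
  unfolding fsupp_def
  by (auto simp: fun_eq_iff sum_fun_apply delta_def if_distrib cong: if_cong)

lemma subst_zero[simp]: "subst \<theta> 0 = 0" by (simp add: subst_def)

lemma subst_add: "fsupp f \<Longrightarrow> fsupp g \<Longrightarrow> subst \<theta> (f + g) = subst \<theta> f + subst \<theta> g"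
proof -
  assume f: "fsupp f" and g: "fsupp g"
  define S where "S = {w. f w \<noteq> 0} \<union> {w. g w \<noteq> 0}"
  have S: "finite S" using f g by (simp add: S_def fsupp_def)
  have "subst \<theta> (f + g) = (\<Sum>w\<in>S. fa_scale ((f+g) w) (wprod \<theta> w))"
    by (rule subst_eq[OF S]) (auto simp: S_def)
  also have "\<dots> = (\<Sum>w\<in>S. fa_scale (f w) (wprod \<theta> w)) + (\<Sum>w\<in>S. fa_scale (g w) (wprod \<theta> w))"
    by (simp add: sum.distrib[symmetric] FA.scale_left_distrib)
  also have "\<dots> = subst \<theta> f + subst \<theta> g"
    by (simp add: subst_eq[OF S] S_def)
  finally show ?thesis .
qed

lemma subst_scale: "subst \<theta> (fa_scale c f) = fa_scale c (subst \<theta> f)"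
proof (cases "c = 0")
  case True then show ?thesis by (simp add: subst_def fun_eq_iff)
next
  case False
  then have "{w. fa_scale c f w \<noteq> 0} = {w. f w \<noteq> 0}" by auto
  then show ?thesis
    by (simp add: subst_def FA.scale_sum_right FA.scale_scale)
qed

lemma subst_sum: "(\<And>i. i \<in> I \<Longrightarrow> fsupp (f i)) \<Longrightarrow> subst \<theta> (\<Sum>i\<in>I. f i) = (\<Sum>i\<in>I. subst \<theta> (f i))"
proof (induction I rule: infinite_finite_induct)
  case (insert x F)
  have e1: "sum f (insert x F) = f x + sum f F" by (rule sum.insert[OF insert.hyps])
  have e2: "(\<Sum>i\<in>insert x F. subst \<theta> (f i)) = subst \<theta> (f x) + (\<Sum>i\<in>F. subst \<theta> (f i))"
    by (rule sum.insert[OF insert.hyps])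
  have "subst \<theta> (f x + sum f F) = subst \<theta> (f x) + subst \<theta> (sum f F)"
    by (intro subst_add fsupp_sum) (use insert.prems in auto)
  moreover have "subst \<theta> (sum f F) = (\<Sum>i\<in>F. subst \<theta> (f i))" using insert by auto
  ultimately show ?case unfolding e1 e2 by metis
qed simp_all

lemma subst_minus: "fsupp f \<Longrightarrow> fsupp g \<Longrightarrow> subst \<theta> (f - g) = subst \<theta> f - subst \<theta> g"
proof -
  assume f: "fsupp f" and g: "fsupp g"
  have "f - g = f + fa_scale (-1) g" by (simp add: fun_eq_iff)
  then have "subst \<theta> (f - g) = subst \<theta> f + fa_scale (-1) (subst \<theta> g)"
    using f g by (simp only: subst_add fsupp_scale subst_scale)
  then show ?thesis by (simp add: fun_eq_iff)
qed

lemma subst_delta: "subst \<theta> (delta u) = wprod \<theta> u"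
  by (subst subst_eq[of "{u}"]) (auto simp: delta_def)

lemma subst_mul:
  assumes f: "fsupp f" and g: "fsupp g"
  shows "subst \<theta> (fa_mul f g) = fa_mul (subst \<theta> f) (subst \<theta> g)"
proof -
  define S where "S = {w. f w \<noteq> 0}"
  define T where "T = {w. g w \<noteq> 0}"
  have S: "finite S" and T: "finite T" using f g by (auto simp: S_def T_def fsupp_def)
  have fe: "f = (\<Sum>u\<in>S. fa_scale (f u) (delta u))" using fa_expand[OF f] by (simp add: S_def)
  have ge: "g = (\<Sum>v\<in>T. fa_scale (g v) (delta v))" using fa_expand[OF g] by (simp add: T_def)
  have fsd: "fsupp (delta u :: _ \<Rightarrow> 'b)" for u
    unfolding fsupp_def delta_def by (rule finite_subset[of _ "{u}"]) auto
  have "fa_mul f g = fa_mul (\<Sum>u\<in>S. fa_scale (f u) (delta u)) (\<Sum>v\<in>T. fa_scale (g v) (delta v))"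
    by (rule arg_cong2[OF fe ge])
  also have "\<dots> = (\<Sum>u\<in>S. \<Sum>v\<in>T. fa_mul (fa_scale (f u) (delta u)) (fa_scale (g v) (delta v)))"
    by (simp only: fa_mul_sum_left fa_mul_sum_right sum.swap[of _ T S])
  also have "\<dots> = (\<Sum>u\<in>S. \<Sum>v\<in>T. fa_scale (f u * g v) (delta (u @ v)))"
    by (simp add: fa_mul_scale_left fa_mul_scale_right delta_mul FA.scale_scale mult.commute)
  finally have e: "fa_mul f g = (\<Sum>u\<in>S. \<Sum>v\<in>T. fa_scale (f u * g v) (delta (u @ v)))" .
  have fs: "fsupp (\<Sum>v\<in>T. fa_scale (f u * g v) (delta (u @ v)))" for u
    by (intro fsupp_sum fsupp_scale fsd)
  have "subst \<theta> (fa_mul f g) = (\<Sum>u\<in>S. subst \<theta> (\<Sum>v\<in>T. fa_scale (f u * g v) (delta (u @ v))))"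
    unfolding e by (rule subst_sum[OF fs])
  also have "\<dots> = (\<Sum>u\<in>S. \<Sum>v\<in>T. subst \<theta> (fa_scale (f u * g v) (delta (u @ v))))"
    by (intro sum.cong refl subst_sum fsupp_scale fsd)
  also have "\<dots> = (\<Sum>u\<in>S. \<Sum>v\<in>T. fa_scale (f u * g v) (wprod \<theta> (u @ v)))"
    by (simp only: subst_scale subst_delta)
  also have "\<dots> = (\<Sum>u\<in>S. \<Sum>v\<in>T. fa_mul (fa_scale (f u) (wprod \<theta> u)) (fa_scale (g v) (wprod \<theta> v)))"
    by (simp add: fa_mul_scale_left fa_mul_scale_right wprod_append FA.scale_scale mult.commute)
  also have "\<dots> = fa_mul (\<Sum>u\<in>S. fa_scale (f u) (wprod \<theta> u)) (\<Sum>v\<in>T. fa_scale (g v) (wprod \<theta> v))"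
    by (simp only: fa_mul_sum_left fa_mul_sum_right sum.swap[of _ T S])
  also have "\<dots> = fa_mul (subst \<theta> f) (subst \<theta> g)"
  proof -
    have "subst \<theta> f = (\<Sum>u\<in>S. fa_scale (f u) (wprod \<theta> u))" by (rule subst_eq[OF S]) (simp add: S_def)
    moreover have "subst \<theta> g = (\<Sum>u\<in>T. fa_scale (g u) (wprod \<theta> u))" by (rule subst_eq[OF T]) (simp add: T_def)
    ultimately show ?thesis by simp
  qed
  finally show ?thesis .
qed

lemma subst_comm: "fsupp f \<Longrightarrow> fsupp g \<Longrightarrow> subst \<theta> (fa_comm f g) = fa_comm (subst \<theta> f) (subst \<theta> g)"
  unfolding fa_comm_def by (simp add: subst_minus fsupp_mul subst_mul)

lemma fa_gen_delta: "fa_gen x = delta [x]"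
  by (simp add: fa_gen_def delta_def fun_eq_iff)

lemma subst_gen: "subst \<theta> (fa_gen x) = \<theta> x"
  by (simp add: fa_gen_delta subst_delta delta_one_right)

lemma comm_len2: "p [] = 0 \<Longrightarrow> q [] = 0 \<Longrightarrow> fa_comm p q [a, b] = p [a] * q [b] - q [a] * p [b]"
  by (simp add: fa_comm_def fa_mul_def atMost_Suc)

lemma low1_len1: "low 1 p \<Longrightarrow> low 1 q \<Longrightarrow> length w < 2 \<Longrightarrow> fa_comm p q w = 0"
  using low_comm[of 1 p 1 q] by (simp add: low_def)


abbreviation LP :: "('x list \<Rightarrow> 'k::field) set \<Rightarrow> ('x list \<Rightarrow> 'k) set \<Rightarrow> ('x list \<Rightarrow> 'k) set" where
  "LP A B \<equiv> lie_prod fa_scale fa_comm A B"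

lemma LP_base: "a \<in> A \<Longrightarrow> b \<in> B \<Longrightarrow> fa_comm a b \<in> LP A B"
  unfolding lie_prod_def by (rule FA.span_base) blast

lemma LP_subspace: "FA.subspace (LP A B)"
  unfolding lie_prod_def by (rule FA.subspace_span)

lemma LP_sub: "FA.subspace P \<Longrightarrow> (\<And>a b. a \<in> A \<Longrightarrow> b \<in> B \<Longrightarrow> fa_comm a b \<in> P) \<Longrightarrow> LP A B \<subseteq> P"
  unfolding lie_prod_def by (rule FA.span_minimal) auto

lemma subspace_pre:
  fixes G :: "('x list \<Rightarrow> 'k::field) \<Rightarrow> ('y list \<Rightarrow> 'k)"
  assumes S: "FA.subspace S" and add: "\<And>x y. G (x + y) = G x + G y"
    and sc: "\<And>c x. G (fa_scale c x) = fa_scale c (G x)"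
  shows "FA.subspace {x. G x \<in> S}"
proof -
  have "G 0 = G (fa_scale 0 0)" by (simp add: fun_eq_iff)
  also have "\<dots> = 0" by (simp only: sc) (simp add: fun_eq_iff)
  finally have "G 0 = 0" .
  then show ?thesis using S unfolding FA.subspace_def by (auto simp: add sc)
qed

lemma subspace_comm_left: "FA.subspace S \<Longrightarrow> FA.subspace {x. fa_comm x c \<in> S}"
  by (rule subspace_pre) (auto simp: fa_comm_add_left fa_comm_scale_left)
lemma subspace_comm_right: "FA.subspace S \<Longrightarrow> FA.subspace {x. fa_comm c x \<in> S}"
  by (rule subspace_pre) (auto simp: fa_comm_add_right fa_comm_scale_right)

lemma LP_sub2:
  assumes P: "FA.subspace P" and h: "\<And>a b c. a \<in> A \<Longrightarrow> b \<in> B \<Longrightarrow> c \<in> C \<Longrightarrow> fa_comm (fa_comm a b) c \<in> P"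
  shows "LP (LP A B) C \<subseteq> P"
proof (rule LP_sub[OF P])
  fix u c assume u: "u \<in> LP A B" and c: "c \<in> C"
  have "LP A B \<subseteq> {x. fa_comm x c \<in> P}"
    by (rule LP_sub[OF subspace_comm_left[OF P]]) (use h c in auto)
  then show "fa_comm u c \<in> P" using u by auto
qed

lemma LP_free: "A \<subseteq> free_lie X \<Longrightarrow> B \<subseteq> free_lie X \<Longrightarrow> LP A B \<subseteq> free_lie X"
  by (rule LP_sub[OF free_lie_subspace]) (auto intro: free_lie.bracket)

lemma trilinear:
  assumes S: "FA.subspace S" and h: "\<And>p q s. p \<in> V \<Longrightarrow> q \<in> V \<Longrightarrow> s \<in> V \<Longrightarrow> fa_comm (fa_comm p q) s \<in> S"
    and a: "a \<in> FA.span V" and b: "b \<in> FA.span V" and c: "c \<in> FA.span V"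
  shows "fa_comm (fa_comm a b) c \<in> S"
proof -
  have s1: "fa_comm (fa_comm a q) s \<in> S" if "a \<in> FA.span V" "q \<in> V" "s \<in> V" for a q s
  proof -
    have "FA.span V \<subseteq> {a. fa_comm (fa_comm a q) s \<in> S}"
      by (rule FA.span_minimal) (use h that in \<open>auto intro!: subspace_pre[OF S]
            simp: fa_comm_add_left fa_comm_scale_left\<close>)
    then show ?thesis using that by auto
  qed
  have s2: "fa_comm (fa_comm a b) s \<in> S" if "a \<in> FA.span V" "b \<in> FA.span V" "s \<in> V" for a b s
  proof -
    have "FA.span V \<subseteq> {b. fa_comm (fa_comm a b) s \<in> S}"
      by (rule FA.span_minimal) (use s1 that in \<open>auto intro!: subspace_pre[OF S]
            simp: fa_comm_add_left fa_comm_add_right fa_comm_scale_left fa_comm_scale_right\<close>)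
    then show ?thesis using that by auto
  qed
  have "FA.span V \<subseteq> {c. fa_comm (fa_comm a b) c \<in> S}"
    by (rule FA.span_minimal) (use s2 a b in \<open>auto intro!: subspace_pre[OF S]
          simp: fa_comm_add_right fa_comm_scale_right\<close>)
  then show ?thesis using c by auto
qed

locale pres =
  fixes scale :: "'k::field \<Rightarrow> 'l::ab_group_add \<Rightarrow> 'l"
    and br :: "'l \<Rightarrow> 'l \<Rightarrow> 'l"
    and X :: "'x set"
    and \<phi> :: "('x list \<Rightarrow> 'k) \<Rightarrow> 'l"
  assumes lie: "lie_algebra scale br"
    and fp: "free_presentation X scale br \<phi>"
begin

abbreviation "F \<equiv> free_lie X :: ('x list \<Rightarrow> 'k) set"
abbreviation "R \<equiv> pres_kernel X \<phi>"
abbreviation "K \<equiv> LP R F"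
abbreviation "N \<equiv> LP K F"

lemma vs: "vector_space scale" using lie by (simp add: lie_algebra_def)

sublocale L: vector_space scale by (rule vs)

lemma br_add_left: "br (x + y) z = br x z + br y z"
  and br_add_right: "br x (y + z) = br x y + br x z"
  and br_scale_left: "br (scale a x) y = scale a (br x y)"
  and br_scale_right: "br x (scale a y) = scale a (br x y)"
  and br_self: "br x x = 0"
  and br_jacobi: "br x (br y z) + br y (br z x) + br z (br x y) = 0"
  using lie by (auto simp: lie_algebra_def)

lemma phi_add: "f \<in> F \<Longrightarrow> g \<in> F \<Longrightarrow> \<phi> (f + g) = \<phi> f + \<phi> g"
  and phi_scale: "f \<in> F \<Longrightarrow> \<phi> (fa_scale c f) = scale c (\<phi> f)"
  and phi_comm: "f \<in> F \<Longrightarrow> g \<in> F \<Longrightarrow> \<phi> (fa_comm f g) = br (\<phi> f) (\<phi> g)"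
  and phi_surj: "\<phi> ` F = UNIV"
  using fp by (auto simp: free_presentation_def)

lemma phi_zero: "\<phi> 0 = 0"
proof -
  have "\<phi> (0 + 0) = \<phi> 0 + \<phi> 0" by (rule phi_add) (auto intro: free_lie.zero)
  then show ?thesis by simp
qed

lemma R_sub: "R \<subseteq> F" by (auto simp: pres_kernel_def)

lemma R_subspace: "FA.subspace R"
  unfolding FA.subspace_def pres_kernel_def
  by (auto intro: free_lie.intros simp: phi_zero phi_add phi_scale)

lemma R_iff: "f \<in> R \<longleftrightarrow> f \<in> F \<and> \<phi> f = 0" by (simp add: pres_kernel_def)

lemma K_sub: "K \<subseteq> F" by (rule LP_free) (use R_sub in auto)
lemma N_sub: "N \<subseteq> F" by (rule LP_free) (use K_sub in auto)

lemma K_gen: "r \<in> R \<Longrightarrow> a \<in> F \<Longrightarrow> fa_comm r a \<in> K" by (rule LP_base)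
lemma K_gen': "r \<in> R \<Longrightarrow> a \<in> F \<Longrightarrow> fa_comm a r \<in> K"
  using FA.subspace_neg[OF LP_subspace K_gen] by (simp add: fa_comm_antisym[of a r])
lemma N_genK: "k \<in> K \<Longrightarrow> b \<in> F \<Longrightarrow> fa_comm k b \<in> N" by (rule LP_base)
lemma N_genK': "k \<in> K \<Longrightarrow> b \<in> F \<Longrightarrow> fa_comm b k \<in> N"
  using FA.subspace_neg[OF LP_subspace N_genK] by (simp add: fa_comm_antisym[of b k])
lemma N_gen1: "r \<in> R \<Longrightarrow> a \<in> F \<Longrightarrow> b \<in> F \<Longrightarrow> fa_comm (fa_comm r a) b \<in> N"
  by (intro N_genK K_gen)
lemma N_gen2: "r \<in> R \<Longrightarrow> a \<in> F \<Longrightarrow> b \<in> F \<Longrightarrow> fa_comm (fa_comm a r) b \<in> N"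
  by (intro N_genK K_gen')
lemma N_gen3: "r \<in> R \<Longrightarrow> a \<in> F \<Longrightarrow> b \<in> F \<Longrightarrow> fa_comm (fa_comm a b) r \<in> N"
proof -
  assume r: "r \<in> R" and a: "a \<in> F" and b: "b \<in> F"
  have "fa_comm (fa_comm a b) r = fa_comm (fa_comm a r) b + fa_comm a (fa_comm b r)"
    by (rule fa_jacobi)
  moreover have "fa_comm (fa_comm a r) b \<in> N" using N_gen2 r a b .
  moreover have "fa_comm a (fa_comm b r) \<in> N" using N_genK' K_gen' r a b by blast
  ultimately show ?thesis using FA.subspace_add[OF LP_subspace] by metis
qed

lemma N_subspace: "FA.subspace N" by (rule LP_subspace)

lemma upper_bound:
  assumes V: "V \<subseteq> F"
    and dec: "\<And>f. f \<in> F \<Longrightarrow> \<exists>v \<in> FA.span V. f - v \<in> R"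
    and S: "FA.subspace S" and NS: "N \<subseteq> S"
    and h: "\<And>p q s. p \<in> V \<Longrightarrow> q \<in> V \<Longrightarrow> s \<in> V \<Longrightarrow> fa_comm (fa_comm p q) s \<in> S"
  shows "LP (LP F F) F \<subseteq> S"
proof (rule LP_sub2[OF S])
  have spanV: "FA.span V \<subseteq> F" using V free_lie_span FA.span_mono by blast
  fix a b c assume a: "a \<in> F" and b: "b \<in> F" and c: "c \<in> F"
  obtain a' where a': "a' \<in> FA.span V" "a - a' \<in> R" using dec[OF a] by blast
  obtain b' where b': "b' \<in> FA.span V" "b - b' \<in> R" using dec[OF b] by blast
  obtain c' where c': "c' \<in> FA.span V" "c - c' \<in> R" using dec[OF c] by blast
  have main: "fa_comm (fa_comm a' b') c' \<in> S" by (rule trilinear[OF S h a'(1) b'(1) c'(1)])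
  have e: "fa_comm (fa_comm a b) c = fa_comm (fa_comm (a - a') b) c + fa_comm (fa_comm a' (b - b')) c
        + fa_comm (fa_comm a' b') (c - c') + fa_comm (fa_comm a' b') c'"
    by (simp add: fa_comm_minus_left fa_comm_minus_right)
  have "fa_comm (fa_comm (a - a') b) c \<in> S" using N_gen1[OF a'(2) b c] NS by auto
  moreover have "fa_comm (fa_comm a' (b - b')) c \<in> S" using N_gen2[OF b'(2) _ c] a'(1) spanV NS by auto
  moreover have "fa_comm (fa_comm a' b') (c - c') \<in> S" using N_gen3[OF c'(2)] a'(1) b'(1) spanV NS by auto
  ultimately show "fa_comm (fa_comm a b) c \<in> S" unfolding e
    using main FA.subspace_add[OF S] by metis
qed

end


lemma quot_dim_crit:
  fixes bb :: "'i \<Rightarrow> ('x list \<Rightarrow> 'k::field)"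
  assumes I: "finite I" and inj: "inj_on bb I" and BM: "bb ` I \<subseteq> M"
    and span: "M \<subseteq> FA.span (bb ` I \<union> N)"
    and ind: "\<And>c. (\<Sum>i\<in>I. fa_scale (c i) (bb i)) \<in> N \<Longrightarrow> \<forall>i\<in>I. c i = 0"
  shows "quot_dim fa_scale M N (card I)"
  unfolding quot_dim_def
proof (intro exI conjI allI impI)
  show "finite (bb ` I)" using I by simp
  show "card (bb ` I) = card I" using card_image[OF inj] .
  show "bb ` I \<subseteq> M" by fact
  show "M \<subseteq> FA.span (bb ` I \<union> N)" by fact
  fix c assume "(\<Sum>b\<in>bb ` I. fa_scale (c b) b) \<in> N"
  then have "(\<Sum>i\<in>I. fa_scale (c (bb i)) (bb i)) \<in> N" by (simp add: sum.reindex[OF inj])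
  then have "\<forall>i\<in>I. c (bb i) = 0" by (rule ind)
  then show "\<forall>b\<in>bb ` I. c b = 0" by auto
qed

locale heis = pres +
  fixes m :: nat
  assumes heis: "heisenberg scale br m"
begin

abbreviation "L2 \<equiv> lie_prod scale br UNIV UNIV"

lemma L2_center: "L2 = lie_center br" and L2_dim: "L.dim L2 = 1"
  and L_dim: "L.dim UNIV = 2 * m + 1"
  using heis by (auto simp: heisenberg_def)

lemma L2_subspace: "L.subspace L2" unfolding lie_prod_def by (rule L.subspace_span)
lemma br_L2: "br a b \<in> L2" unfolding lie_prod_def by (rule L.span_base) blast

lemma ex_z: "\<exists>z. z \<noteq> 0 \<and> L2 = L.span {z}"
proof -
  obtain B where B: "B \<subseteq> L2" "L.independent B" "L2 \<subseteq> L.span B" "card B = L.dim L2"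
    by (rule L.basis_exists)
  have "card B = 1" using B(4) L2_dim by simp
  then obtain z where Bz: "B = {z}" by (rule card_1_singletonE)
  then have "z \<noteq> 0" using B(2) by simp
  moreover have "L.span {z} \<subseteq> L2" using B(1) Bz L2_subspace by (intro L.span_minimal) auto
  ultimately show ?thesis using B(3) Bz by blast
qed

definition "z = (SOME z. z \<noteq> 0 \<and> L2 = L.span {z})"
lemma z_ne: "z \<noteq> 0" and L2_eq: "L2 = L.span {z}"
  using someI_ex[OF ex_z] by (auto simp: z_def)

lemma center_iff: "(\<forall>x. br c x = 0) \<longleftrightarrow> c \<in> L.span {z}"
  using L2_center L2_eq by (auto simp: lie_center_def)

lemma br_central: "c \<in> L.span {z} \<Longrightarrow> br c x = 0" using center_iff by blast

lemma br_ex: "\<exists>c. br a b = scale c z"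
  using br_L2[of a b] L2_eq L.span_singleton by auto

definition "\<omega> a b = (SOME c. br a b = scale c z)"
lemma br_omega: "br a b = scale (\<omega> a b) z"
  using someI_ex[OF br_ex] by (simp add: \<omega>_def)
lemma omega_unique: "br a b = scale c z \<Longrightarrow> \<omega> a b = c"
  using br_omega[of a b] z_ne by simp

lemma omega_add_left: "\<omega> (x + y) w = \<omega> x w + \<omega> y w"
  by (rule omega_unique) (unfold br_add_left, simp only: br_omega L.scale_left_distrib)
lemma omega_add_right: "\<omega> w (x + y) = \<omega> w x + \<omega> w y"
  by (rule omega_unique) (unfold br_add_right, simp only: br_omega L.scale_left_distrib)
lemma omega_scale_left: "\<omega> (scale c x) y = c * \<omega> x y"
  by (rule omega_unique) (unfold br_scale_left, simp only: br_omega L.scale_scale)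
lemma omega_scale_right: "\<omega> x (scale c y) = c * \<omega> x y"
  by (rule omega_unique) (unfold br_scale_right, simp only: br_omega L.scale_scale)
lemma omega_self: "\<omega> x x = 0"
  by (rule omega_unique) (simp add: br_self)
lemma br_antisym: "br y x = - br x y"
proof -
  have "0 = br (x + y) (x + y)" by (simp add: br_self)
  also have "\<dots> = br x x + br y x + (br x y + br y y)" by (simp add: br_add_left br_add_right)
  also have "\<dots> = br x y + br y x" by (simp add: br_self add.commute)
  finally have "br x y + br y x = 0" by simp
  then show ?thesis by (simp add: eq_neg_iff_add_eq_0 add.commute)
qed
lemma omega_antisym: "\<omega> y x = - \<omega> x y"
  by (rule omega_unique) (unfold br_antisym[of y x], simp only: br_omega L.scale_minus_left)
lemma omega_central: "c \<in> L.span {z} \<Longrightarrow> \<omega> c x = 0"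
  by (rule omega_unique) (simp add: br_central)
lemma omega_central': "c \<in> L.span {z} \<Longrightarrow> \<omega> x c = 0"
  using omega_central omega_antisym by (metis neg_equal_0_iff_equal)
lemma omega_nondeg: "(\<And>x. \<omega> c x = 0) \<Longrightarrow> c \<in> L.span {z}"
proof -
  assume h: "\<And>x. \<omega> c x = 0"
  have "\<forall>x. br c x = 0" using h by (simp only: br_omega) simp
  then show ?thesis using center_iff by blast
qed

lemma br_zero_left[simp]: "br 0 x = 0"
proof -
  have "br (0 + 0) x = br 0 x + br 0 x" by (rule br_add_left)
  then show ?thesis by simp
qed
lemma br_zero_right[simp]: "br x 0 = 0"
proof -
  have "br x (0 + 0) = br x 0 + br x 0" by (rule br_add_right)
  then show ?thesis by simp
qed
lemma omega_zero_left[simp]: "\<omega> 0 x = 0"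
  by (rule omega_unique) simp
lemma omega_zero_right[simp]: "\<omega> x 0 = 0"
  by (rule omega_unique) simp
lemma omega_neg_left: "\<omega> (- y) w = - \<omega> y w"
  using omega_add_left[of y "-y" w] by (simp add: eq_neg_iff_add_eq_0 add.commute)
lemma omega_neg_right: "\<omega> w (- y) = - \<omega> w y"
  using omega_add_right[of w y "-y"] by (simp add: eq_neg_iff_add_eq_0 add.commute)
lemma omega_diff_left: "\<omega> (x - y) w = \<omega> x w - \<omega> y w"
  using omega_add_left[of x "- y" w] omega_neg_left by simp
lemma omega_diff_right: "\<omega> w (x - y) = \<omega> w x - \<omega> w y"
  using omega_add_right[of w x "- y"] omega_neg_right by simp
lemma omega_sum_left: "\<omega> (\<Sum>i\<in>I. f i) w = (\<Sum>i\<in>I. \<omega> (f i) w)"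
  by (induction I rule: infinite_finite_induct) (auto simp: omega_add_left)
lemma omega_sum_right: "\<omega> w (\<Sum>i\<in>I. f i) = (\<Sum>i\<in>I. \<omega> w (f i))"
  by (induction I rule: infinite_finite_induct) (auto simp: omega_add_right)

definition "Bs = L.extend_basis {z}"

lemma z_indep: "L.independent {z}" using z_ne by simp
lemma Bs_indep: "L.independent Bs" and Bs_span: "L.span Bs = UNIV" and z_Bs: "z \<in> Bs"
  using L.independent_extend_basis[OF z_indep] L.span_extend_basis[OF z_indep]
    L.extend_basis_superset[OF z_indep] by (auto simp: Bs_def)
lemma Bs_card: "card Bs = 2 * m + 1"
  using L.dim_eq_card[of Bs UNIV] Bs_indep Bs_span L_dim by simp
lemma Bs_finite: "finite Bs"
proof (rule ccontr)
  assume "infinite Bs" then have "card Bs = 0" by simp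
  with Bs_card show False by simp
qed

definition "U = Bs - {z}"
lemma U_card: "card U = 2 * m" using Bs_card Bs_finite z_Bs by (simp add: U_def)
lemma U_finite: "finite U" using Bs_finite by (simp add: U_def)

definition "u = (SOME u. bij_betw u {..<2*m} U)"
lemma u_bij: "bij_betw u {..<2*m} U"
proof -
  have "\<exists>h. bij_betw h {..<2*m} U" using ex_bij_betw_nat_finite[OF U_finite] U_card
    by (simp add: atLeast0LessThan)
  then show ?thesis unfolding u_def by (rule someI_ex)
qed
lemma u_inj: "inj_on u {..<2*m}" using u_bij by (simp add: bij_betw_def)
lemma U_eq: "U = u ` {..<2*m}" using u_bij by (simp add: bij_betw_def)
lemma u_Bs: "a < 2*m \<Longrightarrow> u a \<in> Bs" using U_eq by (auto simp: U_def)
lemma u_ne_z: "a < 2*m \<Longrightarrow> u a \<noteq> z" using U_eq by (auto simp: U_def)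
lemma Bs_eq: "Bs = insert z (u ` {..<2*m})" using U_eq z_Bs by (auto simp: U_def)
lemma u_eq_iff: "a < 2*m \<Longrightarrow> b < 2*m \<Longrightarrow> u a = u b \<longleftrightarrow> a = b"
  using u_inj by (auto dest: inj_onD)

definition "co a l = L.representation Bs l (u a)"
definition "cz l = L.representation Bs l z"

lemma expand: "l = (\<Sum>a<2*m. scale (co a l) (u a)) + scale (cz l) z"
proof -
  have "l = (\<Sum>b\<in>Bs. scale (L.representation Bs l b) b)"
    using L.sum_representation_eq[OF Bs_indep _ Bs_finite] Bs_span by simp
  also have "\<dots> = scale (cz l) z + (\<Sum>b\<in>u ` {..<2*m}. scale (L.representation Bs l b) b)"
  proof -
    define g where "g b = scale (L.representation Bs l b) b" for b
    have nz: "z \<notin> u ` {..<2*m}" using u_ne_z by force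
    have "(\<Sum>b\<in>Bs. g b) = g z + (\<Sum>b\<in>u ` {..<2*m}. g b)"
      unfolding Bs_eq by (rule sum.insert[OF _ nz]) simp
    then show ?thesis by (simp add: g_def cz_def)
  qed
  also have "\<dots> = scale (cz l) z + (\<Sum>a<2*m. scale (co a l) (u a))"
    by (simp add: sum.reindex[OF u_inj] co_def)
  finally show ?thesis by (simp add: add.commute)
qed

lemma rep_add: "L.representation Bs (x + y) b = L.representation Bs x b + L.representation Bs y b"
  using L.representation_add[OF Bs_indep] Bs_span by simp
lemma rep_scale: "L.representation Bs (scale c x) b = c * L.representation Bs x b"
  using L.representation_scale[OF Bs_indep] Bs_span by simp
lemma co_add: "co a (x + y) = co a x + co a y" by (simp add: co_def rep_add)
lemma cz_add: "cz (x + y) = cz x + cz y" by (simp add: cz_def rep_add)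
lemma co_scale: "co a (scale c x) = c * co a x" by (simp add: co_def rep_scale)
lemma cz_scale: "cz (scale c x) = c * cz x" by (simp add: cz_def rep_scale)
lemma co_u: "a < 2*m \<Longrightarrow> b < 2*m \<Longrightarrow> co a (u b) = (if a = b then 1 else 0)"
  using L.representation_basis[OF Bs_indep u_Bs, of b] u_eq_iff by (simp add: co_def)
lemma co_z: "a < 2*m \<Longrightarrow> co a z = 0"
  using L.representation_basis[OF Bs_indep z_Bs] u_ne_z by (simp add: co_def)
lemma cz_u: "b < 2*m \<Longrightarrow> cz (u b) = 0"
  using L.representation_basis[OF Bs_indep u_Bs, of b] u_ne_z[of b] by (auto simp: cz_def)
lemma cz_z: "cz z = 1"
  using L.representation_basis[OF Bs_indep z_Bs] by (simp add: cz_def)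
lemma co_zero[simp]: "co a 0 = 0"
  using co_scale[of a 0 0] by simp
lemma cz_zero[simp]: "cz 0 = 0"
  using cz_scale[of 0 0] by simp

lemma ex_lift: "\<exists>f. f \<in> F \<and> \<phi> f = y" using phi_surj by (metis UNIV_I imageE)

definition "e a = (SOME f. f \<in> F \<and> \<phi> f = u a)"
definition "t = (SOME f. f \<in> F \<and> \<phi> f = z)"
lemma e_F: "e a \<in> F" and phi_e: "\<phi> (e a) = u a"
  using someI_ex[OF ex_lift[of "u a"]] by (auto simp: e_def)
lemma t_F: "t \<in> F" and phi_t: "\<phi> t = z"
  using someI_ex[OF ex_lift[of z]] by (auto simp: t_def)

lemma phi_sum: "(\<And>i. i \<in> I \<Longrightarrow> f i \<in> F) \<Longrightarrow> \<phi> (\<Sum>i\<in>I. f i) = (\<Sum>i\<in>I. \<phi> (f i))"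
proof (induction I rule: infinite_finite_induct)
  case (insert x I)
  have e1: "sum f (insert x I) = f x + sum f I" by (rule sum.insert[OF insert.hyps])
  have e2: "(\<Sum>i\<in>insert x I. \<phi> (f i)) = \<phi> (f x) + (\<Sum>i\<in>I. \<phi> (f i))"
    by (rule sum.insert[OF insert.hyps])
  have "\<phi> (f x + sum f I) = \<phi> (f x) + \<phi> (sum f I)"
    using insert by (intro phi_add free_lie_sum) auto
  moreover have "\<phi> (sum f I) = (\<Sum>i\<in>I. \<phi> (f i))" using insert by auto
  ultimately show ?case unfolding e1 e2 by metis
qed (auto simp: phi_zero)

lemma phi_diff: "f \<in> F \<Longrightarrow> g \<in> F \<Longrightarrow> \<phi> (f - g) = \<phi> f - \<phi> g"
proof -
  assume f: "f \<in> F" and g: "g \<in> F"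
  have "\<phi> (f - g + g) = \<phi> (f - g) + \<phi> g" by (rule phi_add) (use f g free_lie_diff in auto)
  then show ?thesis by (simp add: eq_diff_eq)
qed

lemma decomp:
  assumes f: "f \<in> F"
  shows "f - ((\<Sum>a<2*m. fa_scale (co a (\<phi> f)) (e a)) + fa_scale (cz (\<phi> f)) t) \<in> R"
proof -
  have s: "(\<Sum>a<2*m. fa_scale (co a (\<phi> f)) (e a)) \<in> F"
    by (intro free_lie_sum free_lie.smult e_F)
  have tt: "fa_scale (cz (\<phi> f)) t \<in> F" by (intro free_lie.smult t_F)
  have "\<phi> ((\<Sum>a<2*m. fa_scale (co a (\<phi> f)) (e a)) + fa_scale (cz (\<phi> f)) t)
       = (\<Sum>a<2*m. scale (co a (\<phi> f)) (u a)) + scale (cz (\<phi> f)) z"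
    using s tt by (simp add: phi_add phi_sum phi_scale e_F t_F phi_e phi_t free_lie.smult)
  also have "\<dots> = \<phi> f" using expand[of "\<phi> f"] by simp
  finally show ?thesis using f s tt
    by (simp add: R_iff phi_diff free_lie_diff free_lie.add)
qed

lemma phi_F2: "w \<in> LP F F \<Longrightarrow> \<phi> w \<in> L.span {z}"
proof -
  assume w: "w \<in> LP F F"
  have "LP F F \<subseteq> {w \<in> F. \<phi> w \<in> L.span {z}}"
  proof (rule LP_sub)
    show "FA.subspace {w \<in> F. \<phi> w \<in> L.span {z}}"
      unfolding FA.subspace_def
    proof (intro conjI ballI allI)
      show "0 \<in> {w \<in> F. \<phi> w \<in> L.span {z}}" by (simp add: free_lie.zero phi_zero L.span_zero)
    next
      fix x y assume x: "x \<in> {w \<in> F. \<phi> w \<in> L.span {z}}" and y: "y \<in> {w \<in> F. \<phi> w \<in> L.span {z}}"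
      then show "x + y \<in> {w \<in> F. \<phi> w \<in> L.span {z}}"
        by (simp add: free_lie.add phi_add L.span_add)
    next
      fix c x assume x: "x \<in> {w \<in> F. \<phi> w \<in> L.span {z}}"
      then show "fa_scale c x \<in> {w \<in> F. \<phi> w \<in> L.span {z}}"
        by (simp add: free_lie.smult phi_scale L.span_scale)
    qed
    fix a b assume "a \<in> F" "b \<in> F"
    then show "fa_comm a b \<in> {w \<in> F. \<phi> w \<in> L.span {z}}"
      using br_L2 L2_eq by (auto intro: free_lie.bracket simp: phi_comm)
  qed
  then show ?thesis using w by auto
qed

lemma F3_R: "LP (LP F F) F \<subseteq> R"
proof (rule LP_sub[OF R_subspace])
  fix w c assume w: "w \<in> LP F F" and c: "c \<in> F"
  have wF: "w \<in> F" using w LP_free by blast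
  show "fa_comm w c \<in> R"
    using phi_F2[OF w] wF c by (simp add: R_iff phi_comm br_central free_lie.bracket)
qed

lemma M_eq: "mult2_num X \<phi> = LP (LP F F) F"
  using F3_R by (auto simp: mult2_num_def)
lemma N_eq: "mult2_den X \<phi> = N" by (simp add: mult2_den_def)

lemma F2_sub: "LP F F \<subseteq> F" by (rule LP_free) auto

lemma MM: "a \<in> LP (LP F F) F \<Longrightarrow> b \<in> LP (LP F F) F \<Longrightarrow> fa_comm a b \<in> N"
proof -
  assume a: "a \<in> LP (LP F F) F" and b: "b \<in> LP (LP F F) F"
  have bR: "b \<in> R" using b F3_R by auto
  have "LP (LP F F) F \<subseteq> {a. fa_comm a b \<in> N}"
  proof (rule LP_sub[OF subspace_comm_left[OF N_subspace]])
    fix w c assume "w \<in> LP F F" "c \<in> F"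
    then show "fa_comm w c \<in> {a. fa_comm a b \<in> N}"
      using N_gen3[OF bR] F2_sub by auto
  qed
  then show ?thesis using a by auto
qed

end


context heis begin

lemma exists_nonzero_omega: "\<exists>a b. \<omega> a b \<noteq> 0"
proof (rule ccontr)
  assume "\<not> ?thesis"
  then have "\<forall>a b. br a b = 0" by (simp add: br_omega)
  then have "{br a b | a b. a \<in> UNIV \<and> b \<in> UNIV} \<subseteq> {0}" by auto
  then have "L2 \<subseteq> L.span {0}" unfolding lie_prod_def by (rule L.span_mono)
  moreover have "z \<in> L2" using L2_eq L.span_base by blast
  ultimately have "z \<in> L.span {0}" by blast
  then show False using z_ne by simp
qed

lemma nondeg2:
  assumes m: "2 \<le> m"
  shows "\<exists>p q. \<omega> p y = 0 \<and> \<omega> q y = 0 \<and> \<omega> p q = 1"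
proof (cases "y \<in> L.span {z}")
  case True
  obtain a b where ab: "\<omega> a b \<noteq> 0" using exists_nonzero_omega by blast
  show ?thesis
    by (rule exI[of _ "scale (1 / \<omega> a b) a"], rule exI[of _ b])
       (use ab True in \<open>simp add: omega_central' omega_scale_left\<close>)
next
  case False
  then obtain w0 where w0: "\<omega> y w0 \<noteq> 0" using omega_nondeg by blast
  define w where "w = scale (1 / \<omega> y w0) w0"
  have yw: "\<omega> y w = 1" using w0 by (simp add: w_def omega_scale_right)
  have wy: "\<omega> w y = -1" using yw omega_antisym[of w y] by simp
  define P where "P a = a - scale (\<omega> a w) y + scale (\<omega> a y) w" for a
  have Py: "\<omega> (P a) y = 0" for a
    by (simp add: P_def omega_add_left omega_diff_left omega_scale_left omega_self wy)
  have Pw: "\<omega> (P a) w = 0" for a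
    by (simp add: P_def omega_add_left omega_diff_left omega_scale_left omega_self yw)
  show ?thesis
  proof (cases "\<exists>a b. \<omega> (P a) (P b) \<noteq> 0")
    case True
    then obtain a b where ab: "\<omega> (P a) (P b) \<noteq> 0" by blast
    show ?thesis
      by (rule exI[of _ "scale (1 / \<omega> (P a) (P b)) (P a)"], rule exI[of _ "P b"])
         (use ab in \<open>simp add: omega_scale_left Py\<close>)
  next
    case False
    have dec: "x = P x + scale (\<omega> x w) y - scale (\<omega> x y) w" for x
      by (simp add: P_def)
    have Pz: "P a \<in> L.span {z}" for a
    proof (rule omega_nondeg)
      fix x
      have "\<omega> (P a) x = \<omega> (P a) (P x + scale (\<omega> x w) y - scale (\<omega> x y) w)"
        using dec[of x] by simp
      also have "\<dots> = 0"
        using False by (simp add: omega_add_right omega_diff_right omega_scale_right Py Pw)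
      finally show "\<omega> (P a) x = 0" .
    qed
    have "UNIV \<subseteq> L.span {z, y, w}"
    proof
      fix a :: 'b
      have "P a \<in> L.span {z, y, w}" using Pz L.span_mono[of "{z}" "{z,y,w}"] by auto
      moreover have "y \<in> L.span {z, y, w}" "w \<in> L.span {z, y, w}" by (auto intro: L.span_base)
      ultimately have "P a + scale (\<omega> a w) y - scale (\<omega> a y) w \<in> L.span {z, y, w}"
        by (intro L.span_diff L.span_add L.span_scale)
      then show "a \<in> L.span {z, y, w}" using dec[of a] by simp
    qed
    then have "L.dim UNIV \<le> card {z, y, w}" by (rule L.dim_le_card) simp
    also have "\<dots> \<le> 3" by (simp add: card_insert_le_m1)
    finally show ?thesis using L_dim m by simp
  qed
qed

end


definition hall :: "nat \<Rightarrow> (nat \<times> nat \<times> nat) set" where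
  "hall n = {(i, j, k). i < j \<and> j < n \<and> k \<le> j}"

lemma hall_Suc: "hall (Suc n) = hall n \<union> (\<lambda>(i, k). (i, n, k)) ` ({..<n} \<times> {..n})"
  unfolding hall_def by (auto simp: less_Suc_eq)

lemma hall_finite: "finite (hall n)"
  by (rule finite_subset[of _ "{..<n} \<times> {..<n} \<times> {..<n}"]) (auto simp: hall_def)

lemma hall_card: "card (hall n) * 3 + n = n ^ 3"
proof (induction n)
  case 0
  have "hall 0 = {}" by (auto simp: hall_def)
  then show ?case by simp
next
  case (Suc n)
  have inj: "inj_on (\<lambda>(i, k). (i, n, k)) ({..<n} \<times> {..n})" by (auto simp: inj_on_def)
  have disj: "hall n \<inter> (\<lambda>(i, k). (i, n, k)) ` ({..<n} \<times> {..n}) = {}" by (auto simp: hall_def)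
  have "card (hall (Suc n)) = card (hall n) + n * (n + 1)"
    unfolding hall_Suc using hall_finite disj
    by (subst card_Un_disjoint) (auto simp: card_image[OF inj] card_cartesian_product)
  then show ?case using Suc by (simp add: power3_eq_cube algebra_simps)
qed

definition dw :: "nat \<times> nat \<times> nat \<Rightarrow> nat list" where
  "dw = (\<lambda>(i, j, k). if k = j then [i, j, j] else [j, i, k])"

definition E3 :: "nat \<Rightarrow> nat \<Rightarrow> nat \<Rightarrow> nat list \<Rightarrow> 'k::field" where
  "E3 i j k = fa_comm (fa_comm (fa_gen i) (fa_gen j)) (fa_gen k)"

lemma E3_eq: "E3 i j k = delta [i,j,k] - delta [j,i,k] - delta [k,i,j] + delta [k,j,i]"
  by (simp add: E3_def fa_comm_def fa_gen_delta fa_mul_minus_left fa_mul_minus_right delta_mul)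

lemma E3_diag:
  assumes s: "(i, j, k) \<in> hall n" and t: "(i', j', k') \<in> hall n"
  shows "(E3 i j k (dw (i', j', k')) :: 'k::field) =
    (if (i, j, k) = (i', j', k') then (if k' = j' then 1 else -1) else 0)"
  using s t by (auto simp: E3_eq hall_def dw_def delta_def)


context heis begin

definition "bh = (\<lambda>(i, j, k). fa_comm (fa_comm (e i) (e j)) (e k))"

lemma t_K:
  assumes m: "2 \<le> m" and k: "k < 2*m"
  shows "fa_comm t (e k) \<in> K"
proof -
  obtain p q where pq: "\<omega> p (u k) = 0" "\<omega> q (u k) = 0" "\<omega> p q = 1"
    using nondeg2[OF m] by blast
  obtain p' where p': "p' \<in> F" "\<phi> p' = p" using ex_lift by blast
  obtain q' where q': "q' \<in> F" "\<phi> q' = q" using ex_lift by blast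
  have pqF: "fa_comm p' q' \<in> F" using p' q' by (intro free_lie.bracket)
  have r1: "t - fa_comm p' q' \<in> R"
    using p' q' pqF t_F by (simp add: R_iff free_lie_diff phi_diff phi_comm phi_t br_omega pq)
  have r2: "fa_comm p' (e k) \<in> R"
    using p' e_F by (simp add: R_iff free_lie.bracket phi_comm phi_e br_omega pq)
  have r3: "fa_comm q' (e k) \<in> R"
    using q' e_F by (simp add: R_iff free_lie.bracket phi_comm phi_e br_omega pq)
  have "fa_comm t (e k) = fa_comm (t - fa_comm p' q') (e k) +
      (fa_comm (fa_comm p' (e k)) q' + fa_comm p' (fa_comm q' (e k)))"
    by (simp add: fa_comm_minus_left fa_jacobi[of p' q' "e k"])
  moreover have "fa_comm (t - fa_comm p' q') (e k) \<in> K" using r1 e_F by (rule K_gen)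
  moreover have "fa_comm (fa_comm p' (e k)) q' \<in> K" using r2 q'(1) by (rule K_gen)
  moreover have "fa_comm p' (fa_comm q' (e k)) \<in> K" using r3 p'(1) by (rule K_gen')
  ultimately show ?thesis using FA.subspace_add[OF LP_subspace] by metis
qed

lemma hall_span:
  assumes i: "i < 2*m" and j: "j < 2*m" and k: "k < 2*m"
  shows "bh (i, j, k) \<in> FA.span (bh ` hall (2*m))"
proof -
  have lt: "bh (i, j, k) \<in> FA.span (bh ` hall (2*m))" if ij: "i < j" "j < 2*m" "k < 2*m" for i j k
  proof (cases "k \<le> j")
    case True
    then show ?thesis using ij by (intro FA.span_base) (auto simp: hall_def)
  next
    case False
    have h1: "(i, k, j) \<in> hall (2*m)" using ij False by (auto simp: hall_def)
    have h2: "(j, k, i) \<in> hall (2*m)" using ij False by (auto simp: hall_def)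
    have "bh (i, j, k) = bh (i, k, j) - bh (j, k, i)"
      unfolding bh_def
      by (simp add: fa_jacobi[of "e i" "e j" "e k"] fa_comm_antisym[of "e i" "fa_comm (e j) (e k)"])
    then show ?thesis using h1 h2
      by (simp add: FA.span_diff FA.span_base)
  qed
  consider "i < j" | "i = j" | "j < i" by arith
  then show ?thesis
  proof cases
    case 1 then show ?thesis using lt j k by blast
  next
    case 2 then show ?thesis by (simp add: bh_def FA.span_zero)
  next
    case 3
    have "bh (i, j, k) = - bh (j, i, k)"
      unfolding bh_def by (simp add: fa_comm_antisym[of "e i" "e j"] fa_comm_uminus_left)
    then show ?thesis using lt[OF 3 i k] by (simp add: FA.span_neg)
  qed
qed

lemma upper2:
  assumes m: "2 \<le> m"
  shows "LP (LP F F) F \<subseteq> FA.span (bh ` hall (2*m) \<union> N)"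
proof (rule upper_bound[where V = "insert t (e ` {..<2*m})"])
  let ?S = "FA.span (bh ` hall (2*m) \<union> N)"
  let ?V = "insert t (e ` {..<2*m})"
  show "?V \<subseteq> F" using t_F e_F by auto
  show "FA.subspace ?S" by (rule FA.subspace_span)
  show "N \<subseteq> ?S" by (rule order_trans[OF _ FA.span_superset]) auto
  show "\<exists>v\<in>FA.span ?V. f - v \<in> R" if "f \<in> F" for f
  proof (intro bexI)
    show "f - ((\<Sum>a<2*m. fa_scale (co a (\<phi> f)) (e a)) + fa_scale (cz (\<phi> f)) t) \<in> R"
      by (rule decomp[OF that])
    show "(\<Sum>a<2*m. fa_scale (co a (\<phi> f)) (e a)) + fa_scale (cz (\<phi> f)) t \<in> FA.span ?V"
      by (intro FA.span_add FA.span_sum FA.span_scale FA.span_base) auto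
  qed
  have tK: "fa_comm t v \<in> K" if "v \<in> ?V" for v
    using that t_K[OF m] FA.subspace_0[OF LP_subspace] by auto
  have VF: "v \<in> F" if "v \<in> ?V" for v using that t_F e_F by auto
  have NS: "x \<in> N \<Longrightarrow> x \<in> ?S" for x by (rule FA.span_base) auto
  have A: "fa_comm (fa_comm t q) s \<in> N" if "q \<in> ?V" "s \<in> ?V" for q s
    using N_genK[OF tK[OF that(1)] VF[OF that(2)]] .
  have B: "fa_comm (fa_comm p t) s \<in> N" if "p \<in> ?V" "s \<in> ?V" for p s
  proof -
    have "fa_comm (fa_comm p t) s = - fa_comm (fa_comm t p) s"
      by (simp add: fa_comm_antisym[of p t] fa_comm_uminus_left)
    then show ?thesis using A[OF that] FA.subspace_neg[OF N_subspace] by simp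
  qed
  have C: "fa_comm (fa_comm p q) t \<in> N" if "p \<in> ?V" "q \<in> ?V" for p q
  proof -
    have qt: "fa_comm q t \<in> K"
      using tK[OF that(2)] FA.subspace_neg[OF LP_subspace] by (simp add: fa_comm_antisym[of q t])
    have "fa_comm (fa_comm p q) t = fa_comm (fa_comm p t) q + fa_comm p (fa_comm q t)"
      by (rule fa_jacobi)
    moreover have "fa_comm (fa_comm p t) q \<in> N" using B that by blast
    moreover have "fa_comm p (fa_comm q t) \<in> N" using N_genK'[OF qt VF[OF that(1)]] .
    ultimately show ?thesis using FA.subspace_add[OF N_subspace] by metis
  qed
  fix p q s assume p: "p \<in> ?V" and q: "q \<in> ?V" and s: "s \<in> ?V"
  show "fa_comm (fa_comm p q) s \<in> ?S"
  proof (cases "p = t \<or> q = t \<or> s = t")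
    case True
    then show ?thesis using A[OF q s] B[OF p s] C[OF p q] NS by auto
  next
    case False
    then obtain i j k where ijk: "p = e i" "q = e j" "s = e k" "i < 2*m" "j < 2*m" "k < 2*m"
      using p q s by auto
    have "bh (i, j, k) \<in> FA.span (bh ` hall (2*m))" using hall_span ijk by blast
    then have "bh (i, j, k) \<in> ?S" using FA.span_mono[of "bh ` hall (2*m)"] by blast
    then show ?thesis using ijk by (simp add: bh_def)
  qed
qed

end


lemma approx4:
  fixes p q s p' q' s' :: "'y list \<Rightarrow> 'k::field"
  assumes "low 1 p" "low 1 q" "low 1 s" "low 1 p'" "low 1 q'" "low 1 s'"
    and "low 2 (p - p')" "low 2 (q - q')" "low 2 (s - s')"
  shows "low 4 (fa_comm (fa_comm p q) s - fa_comm (fa_comm p' q') s')"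
proof -
  have e: "fa_comm (fa_comm p q) s - fa_comm (fa_comm p' q') s' =
     fa_comm (fa_comm (p - p') q) s + fa_comm (fa_comm p' (q - q')) s + fa_comm (fa_comm p' q') (s - s')"
    by (simp add: fa_comm_minus_left fa_comm_minus_right)
  have "low (2 + 1 + 1) (fa_comm (fa_comm (p - p') q) s)"
    by (rule low_comm[OF low_comm[OF assms(7) assms(2)] assms(3)])
  moreover have "low (1 + 2 + 1) (fa_comm (fa_comm p' (q - q')) s)"
    by (rule low_comm[OF low_comm[OF assms(4) assms(8)] assms(3)])
  moreover have "low (1 + 1 + 2) (fa_comm (fa_comm p' q') (s - s'))"
    by (rule low_comm[OF low_comm[OF assms(4) assms(5)] assms(9)])
  ultimately have "low 4 (fa_comm (fa_comm (p - p') q) s)" "low 4 (fa_comm (fa_comm p' (q - q')) s)"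
    "low 4 (fa_comm (fa_comm p' q') (s - s'))" by (simp_all add: numeral_eq_Suc)
  then show ?thesis unfolding e by (intro low_add)
qed

lemma subspace_low: "FA.subspace {f. fsupp f \<and> low j (subst \<theta> f)}"
  unfolding FA.subspace_def
  by (auto simp: fsupp_add fsupp_scale subst_add subst_scale low_add low_scale)

context heis begin

definition "\<psi> l = (\<Sum>a<2*m. fa_scale (co a l) (fa_gen (a::nat)))"
definition "\<theta> x = \<psi> (\<phi> (fa_gen x))"
abbreviation "\<Theta> \<equiv> subst \<theta>"

lemma psi_add: "\<psi> (x + y) = \<psi> x + \<psi> y"
  by (simp add: \<psi>_def co_add FA.scale_left_distrib sum.distrib)
lemma psi_scale: "\<psi> (scale c x) = fa_scale c (\<psi> x)"
  by (simp add: \<psi>_def co_scale FA.scale_sum_right)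
lemma psi_zero: "\<psi> 0 = 0"
  by (simp add: \<psi>_def fun_eq_iff)
lemma psi_z: "\<psi> (scale c z) = 0"
  by (simp add: \<psi>_def co_scale co_z fun_eq_iff)
lemma psi_nil: "\<psi> l [] = 0"
  by (simp add: \<psi>_def sum_fun_apply fa_gen_def)
lemma psi_u: "b < 2*m \<Longrightarrow> \<psi> (u b) = fa_gen b"
proof -
  assume b: "b < 2*m"
  have "\<psi> (u b) = (\<Sum>a<2*m. if a = b then fa_gen a else 0)"
    unfolding \<psi>_def by (rule sum.cong) (auto simp: co_u b fun_eq_iff)
  then show ?thesis using b by (simp add: sum.delta)
qed

lemma lam0: "(\<lambda>a. 0) = 0" by (simp add: fun_eq_iff)
lemma lam_plus: "(\<lambda>a. f a + g a) = f + g" by (simp add: fun_eq_iff)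

lemma T1: "f \<in> F \<Longrightarrow> low 1 (\<Theta> f) \<and> (\<forall>w. length w < 2 \<longrightarrow> \<Theta> f w = \<psi> (\<phi> f) w)"
proof (induction rule: free_lie.induct)
  case (gen x)
  then show ?case by (simp add: subst_gen \<theta>_def low_def psi_nil)
next
  case zero
  then show ?case by (simp add: lam0 phi_zero psi_zero)
next
  case (add f g)
  have e1: "\<Theta> (f + g) = \<Theta> f + \<Theta> g" using add free_lie_props by (intro subst_add) auto
  have e2: "\<phi> (f + g) = \<phi> f + \<phi> g" using add by (intro phi_add)
  have IH: "low 1 (\<Theta> f)" "\<forall>w. length w < 2 \<longrightarrow> \<Theta> f w = \<psi> (\<phi> f) w"
    "low 1 (\<Theta> g)" "\<forall>w. length w < 2 \<longrightarrow> \<Theta> g w = \<psi> (\<phi> g) w" using add.IH by auto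
  show ?case
  proof
    show "low 1 (\<Theta> (f + g))" unfolding e1 using IH by (intro low_add)
    show "\<forall>w. length w < 2 \<longrightarrow> \<Theta> (f + g) w = \<psi> (\<phi> (f + g)) w"
      unfolding e1 e2 psi_add using IH by auto
  qed
next
  case (smult f c)
  have e1: "\<Theta> (fa_scale c f) = fa_scale c (\<Theta> f)" by (rule subst_scale)
  have e2: "\<phi> (fa_scale c f) = scale c (\<phi> f)" using smult by (intro phi_scale)
  have IH: "low 1 (\<Theta> f)" "\<forall>w. length w < 2 \<longrightarrow> \<Theta> f w = \<psi> (\<phi> f) w"
    using smult.IH by auto
  show ?case
  proof
    show "low 1 (\<Theta> (fa_scale c f))" unfolding e1 using IH by (intro low_scale)
    show "\<forall>w. length w < 2 \<longrightarrow> \<Theta> (fa_scale c f) w = \<psi> (\<phi> (fa_scale c f)) w"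
      unfolding e1 e2 psi_scale using IH by auto
  qed
next
  case (bracket f g)
  have "\<Theta> (fa_comm f g) = fa_comm (\<Theta> f) (\<Theta> g)" using bracket free_lie_props by (intro subst_comm) auto
  moreover have "\<phi> (fa_comm f g) = scale (\<omega> (\<phi> f) (\<phi> g)) z" using bracket by (simp add: phi_comm br_omega)
  moreover have "low (1 + 1) (fa_comm (\<Theta> f) (\<Theta> g))" using bracket by (intro low_comm) auto
  ultimately show ?case by (auto simp: psi_z low_def)
qed

lemma T2: "r \<in> R \<Longrightarrow> low 2 (\<Theta> r)"
  using T1[of r] by (auto simp: R_iff low_def psi_zero)

lemma T3K: "k \<in> K \<Longrightarrow> fsupp k \<and> low 3 (\<Theta> k)"
proof -
  assume k: "k \<in> K"
  have "K \<subseteq> {f. fsupp f \<and> low 3 (\<Theta> f)}"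
  proof (rule LP_sub[OF subspace_low])
    fix r a assume r: "r \<in> R" and a: "a \<in> F"
    have rF: "r \<in> F" using r R_sub by auto
    have "\<Theta> (fa_comm r a) = fa_comm (\<Theta> r) (\<Theta> a)" using rF a free_lie_props by (intro subst_comm) auto
    moreover have "low (2 + 1) (fa_comm (\<Theta> r) (\<Theta> a))" using T2[OF r] T1[OF a] by (intro low_comm) auto
    ultimately show "fa_comm r a \<in> {f. fsupp f \<and> low 3 (\<Theta> f)}"
      using rF a free_lie_props by (auto intro: fsupp_comm)
  qed
  then show ?thesis using k by auto
qed

lemma T3: "x \<in> N \<Longrightarrow> low 4 (\<Theta> x)"
proof -
  assume x: "x \<in> N"
  have "N \<subseteq> {f. fsupp f \<and> low 4 (\<Theta> f)}"
  proof (rule LP_sub[OF subspace_low])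
    fix k a assume k: "k \<in> K" and a: "a \<in> F"
    have kF: "k \<in> F" using k K_sub by auto
    have "\<Theta> (fa_comm k a) = fa_comm (\<Theta> k) (\<Theta> a)" using kF a free_lie_props by (intro subst_comm) auto
    moreover have "low (3 + 1) (fa_comm (\<Theta> k) (\<Theta> a))" using T3K[OF k] T1[OF a] by (intro low_comm) auto
    ultimately show "fa_comm k a \<in> {f. fsupp f \<and> low 4 (\<Theta> f)}"
      using kF a free_lie_props by (auto intro: fsupp_comm)
  qed
  then show ?thesis using x by auto
qed

lemma e_approx: "a < 2*m \<Longrightarrow> low 2 (\<Theta> (e a) - fa_gen a)"
  using T1[OF e_F[of a]] by (auto simp: low_def phi_e psi_u)

lemma bh_F: "bh \<tau> \<in> F"
  by (cases \<tau>) (auto simp: bh_def intro!: free_lie.bracket e_F)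

lemma Theta_bh:
  assumes "i < 2*m" "j < 2*m" "k < 2*m" "length w = 3"
  shows "\<Theta> (bh (i, j, k)) w = E3 i j k w"
proof -
  have "\<Theta> (bh (i, j, k)) = fa_comm (fa_comm (\<Theta> (e i)) (\<Theta> (e j))) (\<Theta> (e k))"
  proof -
    have fs: "fsupp (e a)" for a using free_lie_props[OF e_F] by blast
    show ?thesis unfolding bh_def by (simp add: subst_comm fsupp_comm fs)
  qed
  moreover have "low 4 (fa_comm (fa_comm (\<Theta> (e i)) (\<Theta> (e j))) (\<Theta> (e k)) - E3 i j k)"
    unfolding E3_def
    by (rule approx4) (use T1[OF e_F] e_approx assms fa_gen_low in auto)
  ultimately show ?thesis using assms(4) by (simp add: low_def)
qed

lemma lower2:
  assumes c: "(\<Sum>\<tau>\<in>hall (2*m). fa_scale (c \<tau>) (bh \<tau>)) \<in> N"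
  shows "\<forall>\<tau>\<in>hall (2*m). c \<tau> = 0"
proof
  fix \<tau> assume \<tau>: "\<tau> \<in> hall (2*m)"
  obtain i' j' k' where \<tau>e: "\<tau> = (i', j', k')" by (cases \<tau>)
  have l4: "low 4 (\<Theta> (\<Sum>\<tau>\<in>hall (2*m). fa_scale (c \<tau>) (bh \<tau>)))" using T3[OF c] .
  have "\<Theta> (\<Sum>\<tau>\<in>hall (2*m). fa_scale (c \<tau>) (bh \<tau>)) = (\<Sum>\<tau>\<in>hall (2*m). fa_scale (c \<tau>) (\<Theta> (bh \<tau>)))"
  proof -
    have fs: "fsupp (bh \<tau>)" for \<tau> using free_lie_props[OF bh_F] by blast
    show ?thesis by (simp add: subst_sum fsupp_scale fs subst_scale)
  qed
  then have "0 = (\<Sum>\<sigma>\<in>hall (2*m). c \<sigma> * \<Theta> (bh \<sigma>) (dw \<tau>))"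
    using l4 by (auto simp: low_def sum_fun_apply dw_def split: prod.splits)
  also have "\<dots> = (\<Sum>\<sigma>\<in>hall (2*m). c \<sigma> * (if \<sigma> = \<tau> then (if k' = j' then 1 else -1) else 0))"
  proof (intro sum.cong refl)
    fix \<sigma> assume \<sigma>: "\<sigma> \<in> hall (2*m)"
    obtain i j k where \<sigma>e: "\<sigma> = (i, j, k)" by (cases \<sigma>)
    have "\<Theta> (bh \<sigma>) (dw \<tau>) = E3 i j k (dw \<tau>)"
      using \<sigma> by (simp add: \<sigma>e Theta_bh hall_def dw_def split: prod.splits) 
    also have "\<dots> = (if \<sigma> = \<tau> then (if k' = j' then 1 else -1) else 0)"
      using E3_diag[of i j k "2*m" i' j' k'] \<sigma> \<tau> by (simp add: \<sigma>e \<tau>e)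
    finally show "c \<sigma> * \<Theta> (bh \<sigma>) (dw \<tau>) = c \<sigma> * (if \<sigma> = \<tau> then (if k' = j' then 1 else -1) else 0)"
      by simp
  qed
  also have "\<dots> = c \<tau> * (if k' = j' then 1 else -1)"
    using \<tau> hall_finite by (simp add: if_distrib[of "\<lambda>x. c _ * x"] sum.delta' cong: if_cong)
  finally show "c \<tau> = 0" by (auto split: if_splits)
qed

lemma bh_inj: "inj_on bh (hall (2*m))"
proof
  fix \<sigma> \<tau> assume \<sigma>: "\<sigma> \<in> hall (2*m)" and \<tau>: "\<tau> \<in> hall (2*m)" and eq: "bh \<sigma> = bh \<tau>"
  obtain i j k where \<sigma>e: "\<sigma> = (i, j, k)" by (cases \<sigma>)
  obtain i' j' k' where \<tau>e: "\<tau> = (i', j', k')" by (cases \<tau>)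
  have l: "length (dw \<tau>) = 3" by (simp add: \<tau>e dw_def)
  have "E3 i j k (dw \<tau>) = (E3 i' j' k' (dw \<tau>) :: 'a)"
    using Theta_bh[OF _ _ _ l, of i j k] Theta_bh[OF _ _ _ l, of i' j' k'] eq \<sigma> \<tau>
    by (auto simp: \<sigma>e \<tau>e hall_def)
  moreover have d1: "E3 i j k (dw \<tau>) = (if \<sigma> = \<tau> then (if k' = j' then 1 else -1) else (0::'a))"
    using E3_diag[of i j k "2*m" i' j' k'] \<sigma> \<tau> by (simp add: \<sigma>e \<tau>e)
  moreover have d2: "E3 i' j' k' (dw \<tau>) \<noteq> (0::'a)"
    using E3_diag[where 'k='a, of i' j' k' "2*m" i' j' k'] \<tau> by (cases "k' = j'") (simp_all add: \<tau>e)
  ultimately show "\<sigma> = \<tau>" by (auto split: if_splits)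
qed

end


context heis begin

lemma bh_F3: "bh \<tau> \<in> LP (LP F F) F"
  by (cases \<tau>) (auto simp: bh_def intro!: LP_base e_F)

lemma case2:
  assumes m: "2 \<le> m"
  shows "mult2_iso_abelian X \<phi> ((8 * m ^ 3 - 2 * m) div 3)"
  unfolding quot_iso_abelian_def M_eq N_eq
proof (intro conjI ballI)
  show "fa_comm a b \<in> N" if "a \<in> LP (LP F F) F" "b \<in> LP (LP F F) F" for a b
    using MM that by blast
  have c: "card (hall (2*m)) = (8 * m ^ 3 - 2 * m) div 3"
  proof -
    have "card (hall (2*m)) * 3 + 2 * m = 8 * m ^ 3" using hall_card[of "2*m"] by simp
    then show ?thesis by simp
  qed
  show "quot_dim fa_scale (LP (LP F F) F) N ((8 * m ^ 3 - 2 * m) div 3)"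
    unfolding c[symmetric]
    by (rule quot_dim_crit[OF hall_finite bh_inj _ upper2[OF m] lower2]) (use bh_F3 in auto)
qed

end


context heis begin

lemma z_span: "z \<in> L.span {z}" by (rule L.span_base) simp
lemma omega_z_left[simp]: "\<omega> z y = 0" using omega_central[OF z_span] .
lemma omega_z_right[simp]: "\<omega> y z = 0" using omega_central'[OF z_span] .

lemma expand1:
  assumes m: "m = 1"
  shows "l = scale (co 0 l) (u 0) + scale (co 1 l) (u 1) + scale (cz l) z"
proof -
  have "l = (\<Sum>a<2*m. scale (co a l) (u a)) + scale (cz l) z" by (rule expand)
  also have "(\<Sum>a<2*m. scale (co a l) (u a)) = scale (co 0 l) (u 0) + scale (co 1 l) (u 1)"
    using m by (simp add: numeral_2_eq_2)
  finally show ?thesis .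
qed

lemma omega_formula:
  assumes m: "m = 1"
  shows "\<omega> x y = (co 0 x * co 1 y - co 1 x * co 0 y) * \<omega> (u 0) (u 1)"
proof -
  have "\<omega> x y = \<omega> (scale (co 0 x) (u 0) + scale (co 1 x) (u 1) + scale (cz x) z)
                  (scale (co 0 y) (u 0) + scale (co 1 y) (u 1) + scale (cz y) z)"
    by (rule arg_cong2[OF expand1[OF m] expand1[OF m]])
  also have "\<dots> = (co 0 x * co 1 y - co 1 x * co 0 y) * \<omega> (u 0) (u 1)"
    apply (simp only: omega_add_left omega_add_right omega_scale_left omega_scale_right
        omega_self omega_z_left omega_z_right omega_antisym[of "u 1" "u 0"])
    apply (simp add: algebra_simps)
    done
  finally show ?thesis .
qed

lemma omega01:
  assumes m: "m = 1"
  shows "\<omega> (u 0) (u 1) \<noteq> 0"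
proof
  assume h: "\<omega> (u 0) (u 1) = 0"
  obtain a b where "\<omega> a b \<noteq> 0" using exists_nonzero_omega by blast
  moreover have "\<omega> a b = 0" using omega_formula[OF m, of a b] h by simp
  ultimately show False by simp
qed

end


context heis begin

definition "Tb = fa_comm (e 1) (e 0)"
definition "bb1 i = (if i = (0::nat) then fa_comm (fa_comm (e 1) (e 0)) (e 0)
   else if i = 1 then fa_comm (fa_comm (e 1) (e 0)) (e 1)
   else if i = 2 then fa_comm (fa_comm Tb (e 0)) (e 0)
   else if i = 3 then fa_comm (fa_comm Tb (e 0)) (e 1)
   else fa_comm (fa_comm Tb (e 1)) (e 1))"

lemma Tb_F: "Tb \<in> F" by (simp add: Tb_def free_lie.bracket e_F)
lemma Tb_F2: "Tb \<in> LP F F" by (simp add: Tb_def LP_base e_F)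

lemma decomp1:
  assumes m: "m = 1" and f: "f \<in> F"
  shows "\<exists>v\<in>FA.span {e 0, e 1, Tb}. f - v \<in> R"
proof -
  define \<kappa> where "\<kappa> = \<omega> (u 1) (u 0)"
  have \<kappa>: "\<kappa> \<noteq> 0" using omega01[OF m] omega_antisym[of "u 1" "u 0"] by (simp add: \<kappa>_def)
  define A where "A = (\<Sum>a<2*m. fa_scale (co a (\<phi> f)) (e a))"
  define c where "c = cz (\<phi> f)"
  have AF: "A \<in> F" unfolding A_def by (intro free_lie_sum free_lie.smult e_F)
  have r1: "f - (A + fa_scale c t) \<in> R" using decomp[OF f] by (simp add: A_def c_def)
  have phiTb: "\<phi> Tb = scale \<kappa> z" by (simp add: Tb_def phi_comm e_F phi_e br_omega \<kappa>_def)
  have r2: "t - fa_scale (1 / \<kappa>) Tb \<in> R"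
    using t_F Tb_F \<kappa> by (simp add: R_iff free_lie_diff free_lie.smult phi_diff phi_scale phi_t phiTb)
  have "(f - (A + fa_scale c t)) + fa_scale c (t - fa_scale (1 / \<kappa>) Tb) \<in> R"
    using r1 r2 FA.subspace_add[OF R_subspace] FA.subspace_scale[OF R_subspace] by blast
  moreover have "(f - (A + fa_scale c t)) + fa_scale c (t - fa_scale (1 / \<kappa>) Tb) = f - (A + fa_scale (c / \<kappa>) Tb)"
    by (simp add: fun_eq_iff algebra_simps)
  ultimately have "f - (A + fa_scale (c / \<kappa>) Tb) \<in> R" by simp
  moreover have "A + fa_scale (c / \<kappa>) Tb \<in> FA.span {e 0, e 1, Tb}"
  proof -
    have "A \<in> FA.span {e 0, e 1, Tb}"
      unfolding A_def using m
      by (intro FA.span_sum FA.span_scale FA.span_base) (auto simp: numeral_2_eq_2 less_Suc_eq)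
    moreover have "fa_scale (c / \<kappa>) Tb \<in> FA.span {e 0, e 1, Tb}"
      by (intro FA.span_scale FA.span_base) auto
    ultimately show ?thesis by (rule FA.span_add)
  qed
  ultimately show ?thesis by blast
qed

lemma upper1:
  assumes m: "m = 1"
  shows "LP (LP F F) F \<subseteq> FA.span (bb1 ` {..<5} \<union> N)"
proof (rule upper_bound[where V = "{e 0, e 1, Tb}"])
  let ?S = "FA.span (bb1 ` {..<5} \<union> N)"
  show "{e 0, e 1, Tb} \<subseteq> F" using e_F Tb_F by auto
  show "FA.subspace ?S" by (rule FA.subspace_span)
  show "N \<subseteq> ?S" by (rule order_trans[OF _ FA.span_superset]) auto
  show "\<exists>v\<in>FA.span {e 0, e 1, Tb}. f - v \<in> R" if "f \<in> F" for f using decomp1[OF m that] .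
  have NS: "x \<in> N \<Longrightarrow> x \<in> ?S" for x by (rule FA.span_base) auto
  have BS: "i < 5 \<Longrightarrow> bb1 i \<in> ?S" for i by (rule FA.span_base) auto
  have ZS: "0 \<in> ?S" by (rule FA.span_zero)
  have negS: "x \<in> ?S \<Longrightarrow> - x \<in> ?S" for x by (rule FA.span_neg)
  have b0: "fa_comm Tb (e 0) \<in> ?S" using BS[of 0] by (simp add: bb1_def Tb_def)
  have b1: "fa_comm Tb (e 1) \<in> ?S" using BS[of 1] by (simp add: bb1_def Tb_def)
  have TbTb: "fa_comm Tb Tb \<in> ?S" using ZS by simp
  have k1: "fa_comm Tb s \<in> ?S" if "s \<in> {e 0, e 1, Tb}" for s using that b0 b1 TbTb by auto
  have yR: "fa_comm Tb (e i) \<in> R" for i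
    using F3_R LP_base[OF Tb_F2 e_F[of i]] by blast
  have TT: "fa_comm (fa_comm Tb (e i)) Tb \<in> N" for i
  proof -
    let ?y = "fa_comm Tb (e i)"
    have "fa_comm (fa_comm ?y (e 1)) (e 0) = fa_comm (fa_comm ?y (e 0)) (e 1) + fa_comm ?y Tb"
      unfolding Tb_def by (rule fa_jacobi)
    then have "fa_comm ?y Tb = fa_comm (fa_comm ?y (e 1)) (e 0) - fa_comm (fa_comm ?y (e 0)) (e 1)"
      by (simp add: algebra_simps)
    moreover have "fa_comm (fa_comm ?y (e 1)) (e 0) \<in> N" using N_gen1[OF yR e_F e_F] .
    moreover have "fa_comm (fa_comm ?y (e 0)) (e 1) \<in> N" using N_gen1[OF yR e_F e_F] .
    ultimately show ?thesis using FA.subspace_diff[OF N_subspace] by metis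
  qed
  have j10: "fa_comm (fa_comm Tb (e 1)) (e 0) = fa_comm (fa_comm Tb (e 0)) (e 1)"
    using fa_jacobi[of Tb "e 1" "e 0", folded Tb_def] by simp
  have k2: "fa_comm (fa_comm Tb q) s \<in> ?S" if "q \<in> {e 0, e 1, Tb}" "s \<in> {e 0, e 1, Tb}" for q s
    using that BS[of 2] BS[of 3] BS[of 4] NS[OF TT[of 0]] NS[OF TT[of 1]] ZS j10
    by (auto simp: bb1_def)
  fix p q s assume p: "p \<in> {e 0, e 1, Tb}" and q: "q \<in> {e 0, e 1, Tb}" and s: "s \<in> {e 0, e 1, Tb}"
  have a1: "fa_comm (fa_comm (e 1) (e 0)) s \<in> ?S" using k1[OF s] by (simp add: Tb_def)
  have a2: "fa_comm (fa_comm (e 0) (e 1)) s \<in> ?S"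
  proof -
    have "fa_comm (fa_comm (e 0) (e 1)) s = - fa_comm (fa_comm (e 1) (e 0)) s"
      by (simp only: fa_comm_antisym[of "e 0" "e 1"] fa_comm_uminus_left)
    then show ?thesis using negS[OF a1] by simp
  qed
  have a3: "fa_comm (fa_comm x Tb) s \<in> ?S" if "x \<in> {e 0, e 1, Tb}" for x
    using negS[OF k2[OF that s]] by (simp add: fa_comm_antisym[of x Tb] fa_comm_uminus_left)
  show "fa_comm (fa_comm p q) s \<in> ?S"
    using p q a1 a2 a3[OF p] k2[OF q s] ZS by auto
qed

end


lemma indep_inj:
  fixes bb :: "'i \<Rightarrow> ('x list \<Rightarrow> 'k::field)"
  assumes I: "finite I" and N: "FA.subspace N"
    and ind: "\<And>c. (\<Sum>i\<in>I. fa_scale (c i) (bb i)) \<in> N \<Longrightarrow> \<forall>i\<in>I. c i = 0"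
  shows "inj_on bb I"
proof (rule inj_onI, rule ccontr)
  fix i j assume i: "i \<in> I" and j: "j \<in> I" and eq: "bb i = bb j" and ne: "i \<noteq> j"
  define c where "c k = (if k = i then 1 else if k = j then -1 else (0::'k))" for k
  have "fa_scale (c k) (bb k) = (if k = i then bb i else 0) + (if k = j then - bb j else 0)" for k
    using ne by (auto simp: c_def fun_eq_iff)
  then have "(\<Sum>k\<in>I. fa_scale (c k) (bb k)) = (\<Sum>k\<in>I. (if k = i then bb i else 0) + (if k = j then - bb j else 0))"
    by simp
  also have "\<dots> = bb i - bb j" using I i j by (simp add: sum.distrib sum.delta)
  also have "\<dots> = 0" using eq by simp
  finally have "(\<Sum>k\<in>I. fa_scale (c k) (bb k)) \<in> N" using FA.subspace_0[OF N] by simp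
  then have "c i = 0" using ind i by blast
  then show False by (simp add: c_def)
qed

lemma approx5:
  fixes p q r s p' q' r' s' :: "'y list \<Rightarrow> 'k::field"
  assumes "low 1 p" "low 1 q" "low 1 r" "low 1 s" "low 1 p'" "low 1 q'" "low 1 r'" "low 1 s'"
    and "low 2 (p - p')" "low 2 (q - q')" "low 2 (r - r')" "low 2 (s - s')"
  shows "low 5 (fa_comm (fa_comm (fa_comm p q) r) s - fa_comm (fa_comm (fa_comm p' q') r') s')"
proof -
  let ?X = "fa_comm (fa_comm p q) r" and ?X' = "fa_comm (fa_comm p' q') r'"
  have e: "fa_comm ?X s - fa_comm ?X' s' = fa_comm (?X - ?X') s + fa_comm ?X' (s - s')"
    by (simp add: fa_comm_minus_left fa_comm_minus_right)
  have "low 4 (?X - ?X')" by (rule approx4) (use assms in auto)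
  then have "low (4 + 1) (fa_comm (?X - ?X') s)" using assms(4) by (rule low_comm)
  moreover have "low (1 + 1 + 1 + 2) (fa_comm ?X' (s - s'))"
    by (rule low_comm[OF low_comm[OF low_comm[OF assms(5) assms(6)] assms(7)] assms(12)])
  ultimately have "low 5 (fa_comm (?X - ?X') s)" "low 5 (fa_comm ?X' (s - s'))"
    by (simp_all add: numeral_eq_Suc)
  then show ?thesis unfolding e by (intro low_add)
qed

definition E4 :: "nat \<Rightarrow> nat \<Rightarrow> nat list \<Rightarrow> 'k::field" where
  "E4 i j = fa_comm (fa_comm (fa_comm (fa_gen 1) (fa_gen 0)) (fa_gen i)) (fa_gen j)"

lemma E4_vals:
  "E4 0 0 [1,0,0,0] = (1::'k::field)" "E4 0 0 [0,0,1,1] = (0::'k)" "E4 0 0 [1,1,1,0] = (0::'k)"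
  "E4 0 1 [1,0,0,0] = (0::'k)" "E4 0 1 [0,0,1,1] = (1::'k)" "E4 0 1 [1,1,1,0] = (0::'k)"
  "E4 1 1 [1,0,0,0] = (0::'k)" "E4 1 1 [0,0,1,1] = (0::'k)" "E4 1 1 [1,1,1,0] = (1::'k)"
  unfolding E4_def fa_comm_def fa_gen_delta fa_mul_minus_left fa_mul_minus_right delta_mul
  by (simp_all add: delta_def)

lemma E3_vals:
  "E3 1 0 0 [1,0,0] = (1::'k::field)" "E3 1 0 0 [0,1,1] = (0::'k)"
  "E3 1 0 1 [1,0,0] = (0::'k)" "E3 1 0 1 [0,1,1] = (-1::'k)"
  by (simp_all add: E3_eq delta_def)


definition G01 :: "nat list \<Rightarrow> 'k::field" where "G01 = fa_comm (fa_gen (0::nat)) (fa_gen 1)"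

lemma G01_eq: "G01 = delta [0,1] - delta [1,0]"
  by (simp add: G01_def fa_comm_def fa_gen_delta delta_mul)

context heis begin

definition "\<psi>1 l = fa_scale (co 0 l) (fa_gen (0::nat)) + fa_scale (co 1 l) (fa_gen 1)
                  + fa_scale (cz l / \<omega> (u 0) (u 1)) G01"
definition "\<theta>1 x = \<psi>1 (\<phi> (fa_gen x))"
abbreviation "\<Theta>1 \<equiv> subst \<theta>1"

lemma psi1_add: "\<psi>1 (x + y) = \<psi>1 x + \<psi>1 y"
  by (simp add: \<psi>1_def co_add cz_add fun_eq_iff algebra_simps add_divide_distrib)
lemma psi1_scale: "\<psi>1 (scale c x) = fa_scale c (\<psi>1 x)"
  by (simp add: \<psi>1_def co_scale cz_scale fun_eq_iff algebra_simps)
lemma psi1_zero: "\<psi>1 0 = 0"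
  by (simp add: \<psi>1_def fun_eq_iff)
lemma psi1_nil: "\<psi>1 l [] = 0"
  by (simp add: \<psi>1_def fa_gen_def G01_eq delta_def)
lemma psi1_len1: "\<psi>1 l [a] = co 0 l * (if a = 0 then 1 else 0) + co 1 l * (if a = 1 then 1 else 0)"
  by (simp add: \<psi>1_def fa_gen_def G01_eq delta_def)
lemma psi1_len2: "\<psi>1 l [a, b] = (cz l / \<omega> (u 0) (u 1)) *
     ((if a = 0 \<and> b = 1 then 1 else 0) - (if a = 1 \<and> b = 0 then 1 else 0))"
  by (simp add: \<psi>1_def fa_gen_def G01_eq delta_def)
lemma psi1_u:
  assumes m: "m = 1" and a: "a < 2"
  shows "\<psi>1 (u a) = fa_gen a"
proof -
  have a': "a < 2*m" and z': "0 < 2*m" and o': "1 < 2*m" using m a by auto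
  have "co 0 (u a) = (if a = 0 then 1 else 0)" using co_u[OF z' a'] by auto
  moreover have "co 1 (u a) = (if a = 1 then 1 else 0)" using co_u[OF o' a'] by auto
  moreover have "cz (u a) = 0" using cz_u[OF a'] .
  ultimately show ?thesis using a by (auto simp: \<psi>1_def fun_eq_iff less_2_cases_iff)
qed

lemma psi1_br:
  assumes m: "m = 1"
  shows "\<psi>1 (br x y) = fa_scale (co 0 x * co 1 y - co 1 x * co 0 y) G01"
proof -
  have z': "0 < 2*m" and o': "1 < 2*m" using m by auto
  have "\<psi>1 (br x y) = \<psi>1 (scale (\<omega> x y) z)" by (simp add: br_omega)
  also have "\<dots> = fa_scale (\<omega> x y / \<omega> (u 0) (u 1)) G01"
  proof -
    have c0: "co 0 z = 0" using co_z[OF z'] .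
    have c1: "co (Suc 0) z = 0" using co_z[OF o'] by simp
    show ?thesis by (simp add: \<psi>1_def co_scale cz_scale cz_z c0 c1 fun_eq_iff)
  qed
  also have "\<omega> x y / \<omega> (u 0) (u 1) = co 0 x * co 1 y - co 1 x * co 0 y"
    using omega01[OF m] by (simp add: omega_formula[OF m, of x y])
  finally show ?thesis .
qed

lemma T1':
  assumes m: "m = 1"
  shows "f \<in> F \<Longrightarrow> low 1 (\<Theta>1 f) \<and> (\<forall>w. length w < 3 \<longrightarrow> \<Theta>1 f w = \<psi>1 (\<phi> f) w)"
proof (induction rule: free_lie.induct)
  case (gen x)
  then show ?case by (simp add: subst_gen \<theta>1_def low_def psi1_nil)
next
  case zero
  then show ?case by (simp add: lam0 phi_zero psi1_zero)
next
  case (add f g)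
  have e1: "\<Theta>1 (f + g) = \<Theta>1 f + \<Theta>1 g" using add free_lie_props by (intro subst_add) auto
  have e2: "\<phi> (f + g) = \<phi> f + \<phi> g" using add by (intro phi_add)
  have IH: "low 1 (\<Theta>1 f)" "\<forall>w. length w < 3 \<longrightarrow> \<Theta>1 f w = \<psi>1 (\<phi> f) w"
    "low 1 (\<Theta>1 g)" "\<forall>w. length w < 3 \<longrightarrow> \<Theta>1 g w = \<psi>1 (\<phi> g) w" using add.IH by auto
  show ?case
  proof
    show "low 1 (\<Theta>1 (f + g))" unfolding e1 using IH by (intro low_add)
    show "\<forall>w. length w < 3 \<longrightarrow> \<Theta>1 (f + g) w = \<psi>1 (\<phi> (f + g)) w"
      unfolding e1 e2 psi1_add using IH by auto
  qed
next
  case (smult f c)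
  have e1: "\<Theta>1 (fa_scale c f) = fa_scale c (\<Theta>1 f)" by (rule subst_scale)
  have e2: "\<phi> (fa_scale c f) = scale c (\<phi> f)" using smult by (intro phi_scale)
  have IH: "low 1 (\<Theta>1 f)" "\<forall>w. length w < 3 \<longrightarrow> \<Theta>1 f w = \<psi>1 (\<phi> f) w"
    using smult.IH by auto
  show ?case
  proof
    show "low 1 (\<Theta>1 (fa_scale c f))" unfolding e1 using IH by (intro low_scale)
    show "\<forall>w. length w < 3 \<longrightarrow> \<Theta>1 (fa_scale c f) w = \<psi>1 (\<phi> (fa_scale c f)) w"
      unfolding e1 e2 psi1_scale using IH by auto
  qed
next
  case (bracket f g)
  have e1: "\<Theta>1 (fa_comm f g) = fa_comm (\<Theta>1 f) (\<Theta>1 g)"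
    using bracket free_lie_props by (intro subst_comm) auto
  have e2: "\<phi> (fa_comm f g) = br (\<phi> f) (\<phi> g)" using bracket by (intro phi_comm)
  have IH: "low 1 (\<Theta>1 f)" "\<forall>w. length w < 3 \<longrightarrow> \<Theta>1 f w = \<psi>1 (\<phi> f) w"
    "low 1 (\<Theta>1 g)" "\<forall>w. length w < 3 \<longrightarrow> \<Theta>1 g w = \<psi>1 (\<phi> g) w" using bracket.IH by auto
  have l2: "low (1 + 1) (fa_comm (\<Theta>1 f) (\<Theta>1 g))" using IH by (intro low_comm)
  show ?case
  proof
    show "low 1 (\<Theta>1 (fa_comm f g))" unfolding e1 using l2 by (rule low_mono) simp
    show "\<forall>w. length w < 3 \<longrightarrow> \<Theta>1 (fa_comm f g) w = \<psi>1 (\<phi> (fa_comm f g)) w"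
    proof (intro allI impI)
      fix w :: "nat list" assume w: "length w < 3"
      define x where "x = \<phi> f"
      define y where "y = \<phi> g"
      have rhs: "\<psi>1 (\<phi> (fa_comm f g)) = fa_scale (co 0 x * co 1 y - co 1 x * co 0 y) G01"
        unfolding e2 x_def y_def by (rule psi1_br[OF m])
      show "\<Theta>1 (fa_comm f g) w = \<psi>1 (\<phi> (fa_comm f g)) w"
      proof (cases "length w < 2")
        case True
        then have "fa_comm (\<Theta>1 f) (\<Theta>1 g) w = 0" using l2 by (simp add: low_def)
        moreover have "(G01 w :: 'a) = 0" using True by (auto simp: G01_eq delta_def)
        ultimately show ?thesis unfolding e1 rhs by simp
      next
        case False
        then obtain a b where wab: "w = [a, b]" using w
          by (metis (no_types) length_0_conv length_Suc_conv less_Suc_eq numeral_2_eq_2 numeral_3_eq_3 not_less)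
        have f0: "\<Theta>1 f [] = 0" and g0: "\<Theta>1 g [] = 0" using IH by (auto simp: low_def)
        have fa: "\<Theta>1 f [c] = \<psi>1 x [c]" and ga: "\<Theta>1 g [c] = \<psi>1 y [c]" for c
          using IH by (auto simp: x_def y_def)
        have "\<Theta>1 (fa_comm f g) w = \<psi>1 x [a] * \<psi>1 y [b] - \<psi>1 y [a] * \<psi>1 x [b]"
          unfolding e1 wab comm_len2[of "\<Theta>1 f" "\<Theta>1 g", OF f0 g0] fa ga ..
        also have "\<dots> = (co 0 x * co 1 y - co 1 x * co 0 y) * G01 [a, b]"
          by (auto simp: psi1_len1 G01_eq delta_def algebra_simps)
        finally show ?thesis unfolding rhs wab by simp
      qed
    qed
  qed
qed

end


context heis begin

lemma T2':
  assumes m: "m = 1" and r: "r \<in> R"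
  shows "low 3 (\<Theta>1 r)"
  using T1'[OF m, of r] r by (auto simp: R_iff low_def psi1_zero)

lemma T3K':
  assumes m: "m = 1"
  shows "k \<in> K \<Longrightarrow> fsupp k \<and> low 4 (\<Theta>1 k)"
proof -
  assume k: "k \<in> K"
  have "K \<subseteq> {f. fsupp f \<and> low 4 (\<Theta>1 f)}"
  proof (rule LP_sub[OF subspace_low])
    fix r a assume r: "r \<in> R" and a: "a \<in> F"
    have rF: "r \<in> F" using r R_sub by auto
    have "\<Theta>1 (fa_comm r a) = fa_comm (\<Theta>1 r) (\<Theta>1 a)" using rF a free_lie_props by (intro subst_comm) auto
    moreover have "low (3 + 1) (fa_comm (\<Theta>1 r) (\<Theta>1 a))"
      using T2'[OF m r] T1'[OF m a] by (intro low_comm) auto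
    ultimately show "fa_comm r a \<in> {f. fsupp f \<and> low 4 (\<Theta>1 f)}"
      using rF a free_lie_props by (auto intro: fsupp_comm)
  qed
  then show ?thesis using k by auto
qed

lemma T3':
  assumes m: "m = 1"
  shows "x \<in> N \<Longrightarrow> low 5 (\<Theta>1 x)"
proof -
  assume x: "x \<in> N"
  have "N \<subseteq> {f. fsupp f \<and> low 5 (\<Theta>1 f)}"
  proof (rule LP_sub[OF subspace_low])
    fix k a assume k: "k \<in> K" and a: "a \<in> F"
    have kF: "k \<in> F" using k K_sub by auto
    have "\<Theta>1 (fa_comm k a) = fa_comm (\<Theta>1 k) (\<Theta>1 a)" using kF a free_lie_props by (intro subst_comm) auto
    moreover have "low (4 + 1) (fa_comm (\<Theta>1 k) (\<Theta>1 a))"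
      using T3K'[OF m k] T1'[OF m a] by (intro low_comm) auto
    ultimately show "fa_comm k a \<in> {f. fsupp f \<and> low 5 (\<Theta>1 f)}"
      using kF a free_lie_props by (auto intro: fsupp_comm)
  qed
  then show ?thesis using x by auto
qed

lemma e_low1: "m = 1 \<Longrightarrow> low 1 (\<Theta>1 (e a))" using T1'[OF _ e_F] by blast

lemma e_approx1:
  assumes m: "m = 1" and a: "a < 2"
  shows "low 2 (\<Theta>1 (e a) - fa_gen a)"
proof -
  have a': "a < 2*m" using m a by simp
  show ?thesis using T1'[OF m e_F[of a]] by (auto simp: low_def phi_e psi1_u[OF m a])
qed

lemma fs_e: "fsupp (e a)" using free_lie_props[OF e_F] by blast

lemma Th3:
  assumes m: "m = 1" and abc: "a < 2" "b < 2" "c < 2" and w: "length w = 3"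
  shows "\<Theta>1 (fa_comm (fa_comm (e a) (e b)) (e c)) w = E3 a b c w"
proof -
  have "\<Theta>1 (fa_comm (fa_comm (e a) (e b)) (e c)) = fa_comm (fa_comm (\<Theta>1 (e a)) (\<Theta>1 (e b))) (\<Theta>1 (e c))"
    by (simp add: subst_comm fsupp_comm fs_e)
  moreover have "low 4 (fa_comm (fa_comm (\<Theta>1 (e a)) (\<Theta>1 (e b))) (\<Theta>1 (e c)) - E3 a b c)"
    unfolding E3_def
    by (rule approx4) (use e_low1[OF m] e_approx1[OF m] abc fa_gen_low in auto)
  ultimately show ?thesis using w by (simp add: low_def)
qed

lemma Th4:
  assumes m: "m = 1" and abcd: "a < 2" "b < 2" "c < 2" "d < 2"
  shows "low 4 (\<Theta>1 (fa_comm (fa_comm (fa_comm (e a) (e b)) (e c)) (e d)))"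
    and "length w = 4 \<Longrightarrow> \<Theta>1 (fa_comm (fa_comm (fa_comm (e a) (e b)) (e c)) (e d)) w =
        fa_comm (fa_comm (fa_comm (fa_gen a) (fa_gen b)) (fa_gen c)) (fa_gen d) w"
proof -
  have eq: "\<Theta>1 (fa_comm (fa_comm (fa_comm (e a) (e b)) (e c)) (e d)) =
      fa_comm (fa_comm (fa_comm (\<Theta>1 (e a)) (\<Theta>1 (e b))) (\<Theta>1 (e c))) (\<Theta>1 (e d))"
    by (simp add: subst_comm fsupp_comm fs_e)
  have "low (1 + 1 + 1 + 1) (fa_comm (fa_comm (fa_comm (\<Theta>1 (e a)) (\<Theta>1 (e b))) (\<Theta>1 (e c))) (\<Theta>1 (e d)))"
    using e_low1[OF m] by (intro low_comm) auto
  then show "low 4 (\<Theta>1 (fa_comm (fa_comm (fa_comm (e a) (e b)) (e c)) (e d)))"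
    unfolding eq by (simp add: numeral_eq_Suc)
  have "low 5 (fa_comm (fa_comm (fa_comm (\<Theta>1 (e a)) (\<Theta>1 (e b))) (\<Theta>1 (e c))) (\<Theta>1 (e d)) -
       fa_comm (fa_comm (fa_comm (fa_gen a) (fa_gen b)) (fa_gen c)) (fa_gen d))"
    by (rule approx5) (use e_low1[OF m] e_approx1[OF m] abcd fa_gen_low in auto)
  then show "length w = 4 \<Longrightarrow> \<Theta>1 (fa_comm (fa_comm (fa_comm (e a) (e b)) (e c)) (e d)) w =
        fa_comm (fa_comm (fa_comm (fa_gen a) (fa_gen b)) (fa_gen c)) (fa_gen d) w"
    unfolding eq by (simp add: low_def)
qed

end


context heis begin

lemma bb1_F: "bb1 i \<in> F"
  by (simp add: bb1_def Tb_def free_lie.bracket e_F)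
lemma bb1_F3: "bb1 i \<in> LP (LP F F) F"
  unfolding bb1_def by (auto intro!: LP_base e_F Tb_F free_lie.bracket)

lemma vals3:
  assumes m: "m = 1" and w: "length w = 3"
  shows "\<Theta>1 (bb1 0) w = E3 1 0 0 w" "\<Theta>1 (bb1 1) w = E3 1 0 1 w"
    "\<Theta>1 (bb1 2) w = 0" "\<Theta>1 (bb1 3) w = 0" "\<Theta>1 (bb1 4) w = 0"
proof -
  show "\<Theta>1 (bb1 0) w = E3 1 0 0 w" using Th3[OF m _ _ _ w, of 1 0 0] by (simp add: bb1_def)
  show "\<Theta>1 (bb1 1) w = E3 1 0 1 w" using Th3[OF m _ _ _ w, of 1 0 1] by (simp add: bb1_def)
  show "\<Theta>1 (bb1 2) w = 0" using Th4(1)[OF m, of 1 0 0 0] w by (simp add: bb1_def Tb_def low_def)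
  show "\<Theta>1 (bb1 3) w = 0" using Th4(1)[OF m, of 1 0 0 1] w by (simp add: bb1_def Tb_def low_def)
  show "\<Theta>1 (bb1 4) w = 0" using Th4(1)[OF m, of 1 0 1 1] w by (simp add: bb1_def Tb_def low_def)
qed

lemma vals4:
  assumes m: "m = 1" and w: "length w = 4"
  shows "\<Theta>1 (bb1 2) w = E4 0 0 w" "\<Theta>1 (bb1 3) w = E4 0 1 w" "\<Theta>1 (bb1 4) w = E4 1 1 w"
proof -
  show "\<Theta>1 (bb1 2) w = E4 0 0 w" using Th4(2)[OF m _ _ _ _ w, of 1 0 0 0] by (simp add: bb1_def Tb_def E4_def)
  show "\<Theta>1 (bb1 3) w = E4 0 1 w" using Th4(2)[OF m _ _ _ _ w, of 1 0 0 1] by (simp add: bb1_def Tb_def E4_def)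
  show "\<Theta>1 (bb1 4) w = E4 1 1 w" using Th4(2)[OF m _ _ _ _ w, of 1 0 1 1] by (simp add: bb1_def Tb_def E4_def)
qed

lemma sum5: "(\<Sum>i<5. h i) = h 0 + h 1 + h 2 + h 3 + h (4::nat)"
  by (simp add: numeral_eq_Suc add.commute add.left_commute)

lemma lower1:
  assumes m: "m = 1" and c: "(\<Sum>i<5. fa_scale (c i) (bb1 i)) \<in> N"
  shows "\<forall>i<5. c i = 0"
proof -
  define v where "v i w = \<Theta>1 (bb1 i) w" for i w
  have fs: "fsupp (bb1 i)" for i using free_lie_props[OF bb1_F] by blast
  have l5: "low 5 (\<Theta>1 (\<Sum>i<5. fa_scale (c i) (bb1 i)))" using T3'[OF m c] .
  have eq: "\<Theta>1 (\<Sum>i<5. fa_scale (c i) (bb1 i)) = (\<Sum>i<5. fa_scale (c i) (\<Theta>1 (bb1 i)))"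
    by (simp add: subst_sum fsupp_scale fs subst_scale)
  have h: "c 0 * v 0 w + c 1 * v 1 w + c 2 * v 2 w + c 3 * v 3 w + c 4 * v 4 w = 0" if "length w < 5" for w
  proof -
    have "(\<Sum>i<5. fa_scale (c i) (\<Theta>1 (bb1 i))) w = 0" using l5 that unfolding eq by (simp add: low_def)
    then show ?thesis unfolding sum5 by (simp add: v_def)
  qed
  have len3: "length [1,0,0::nat] = 3" "length [0,1,1::nat] = 3" by simp_all
  have len4: "length [1,0,0,0::nat] = 4" "length [0,0,1,1::nat] = 4" "length [1,1,1,0::nat] = 4" by simp_all
  have w0: "v 0 [1,0,0] = 1" "v 1 [1,0,0] = 0" "v 2 [1,0,0] = 0" "v 3 [1,0,0] = 0" "v 4 [1,0,0] = 0"
    unfolding v_def vals3[OF m, of "[1,0,0]", OF len3(1)] by (simp_all only: E3_vals)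
  have w1: "v 0 [0,1,1] = 0" "v 1 [0,1,1] = -1" "v 2 [0,1,1] = 0" "v 3 [0,1,1] = 0" "v 4 [0,1,1] = 0"
    unfolding v_def vals3[OF m, of "[0,1,1]", OF len3(2)] by (simp_all only: E3_vals)
  have w2: "v 2 [1,0,0,0] = 1" "v 3 [1,0,0,0] = 0" "v 4 [1,0,0,0] = 0"
    unfolding v_def vals4[OF m, of "[1,0,0,0]", OF len4(1)] by (simp_all only: E4_vals)
  have w3: "v 2 [0,0,1,1] = 0" "v 3 [0,0,1,1] = 1" "v 4 [0,0,1,1] = 0"
    unfolding v_def vals4[OF m, of "[0,0,1,1]", OF len4(2)] by (simp_all only: E4_vals)
  have w4: "v 2 [1,1,1,0] = 0" "v 3 [1,1,1,0] = 0" "v 4 [1,1,1,0] = 1"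
    unfolding v_def vals4[OF m, of "[1,1,1,0]", OF len4(3)] by (simp_all only: E4_vals)
  have c0: "c 0 = 0" using h[of "[1,0,0]"] w0 by simp
  have c1: "c 1 = 0" using h[of "[0,1,1]"] w1 by simp
  have c2: "c 2 = 0" using h[of "[1,0,0,0]"] w2 c0 c1 by simp
  have c3: "c 3 = 0" using h[of "[0,0,1,1]"] w3 c0 c1 by simp
  have c4: "c 4 = 0" using h[of "[1,1,1,0]"] w4 c0 c1 by simp
  show ?thesis
  proof (intro allI impI)
    fix i :: nat assume "i < 5"
    then have "i = 0 \<or> i = 1 \<or> i = 2 \<or> i = 3 \<or> i = 4" by arith
    then show "c i = 0" using c0 c1 c2 c3 c4 by auto
  qed
qed

lemma case1:
  assumes m: "m = 1"
  shows "mult2_iso_abelian X \<phi> 5"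
  unfolding quot_iso_abelian_def M_eq N_eq
proof (intro conjI ballI)
  show "fa_comm a b \<in> N" if "a \<in> LP (LP F F) F" "b \<in> LP (LP F F) F" for a b
    using MM that by blast
  have ind: "\<forall>i\<in>{..<5}. c i = 0" if "(\<Sum>i\<in>{..<5}. fa_scale (c i) (bb1 i)) \<in> N" for c
    using lower1[OF m that] by auto
  have inj: "inj_on bb1 {..<5}" by (rule indep_inj[OF _ N_subspace ind]) auto
  have "quot_dim fa_scale (LP (LP F F) F) N (card {..<5::nat})"
    by (rule quot_dim_crit[OF _ inj _ upper1[OF m] ind]) (use bb1_F3 in auto)
  then show "quot_dim fa_scale (LP (LP F F) F) N 5" by simp
qed

end


theorem theorem2p11:
  fixes scale :: "'k::field \<Rightarrow> 'l::ab_group_add \<Rightarrow> 'l"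
    and br :: "'l \<Rightarrow> 'l \<Rightarrow> 'l"
    and X :: "'x set"
    and \<phi> :: "('x list \<Rightarrow> 'k) \<Rightarrow> 'l"
    and m :: nat
  assumes "heisenberg scale br m"
    and "free_presentation X scale br \<phi>"
  shows "(m = 1 \<longrightarrow> mult2_iso_abelian X \<phi> 5) \<and>
         (m \<ge> 2 \<longrightarrow> mult2_iso_abelian X \<phi> ((8 * m ^ 3 - 2 * m) div 3))"
proof -
  have lie: "lie_algebra scale br" using assms(1) by (simp add: heisenberg_def)
  interpret H: heis scale br X \<phi> m
    by unfold_locales (use lie assms in auto)
  show ?thesis using H.case1 H.case2 by auto
qed

end
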